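(* Let $s>1/2$, $x\in\mathbb R$, and let $u(t)$ be a smooth curve in $H^s_+$ such that $I-xH_{u(t)}^2$ is invertible for all $t$ and $$\partial_tu=\frac{x}{2i}\,w\,H_uw,\qquad w=w(x):=(I-xH_u^2)^{-1}(1).$$ Then $$\partial_tK_u=[C_u^x,K_u],\qquad C_u^x(h)=\frac{x}{4i}\Big(w\,\Pi(\bar wh)+x\,H_uw\,\Pi(\overline{H_uw}\,h)\Big).$$
   Context: $L^2_+$ is the Hardy space of the circle, $(u|v)=\int u\bar v\frac{d\theta}{2\pi}$, $H^s_+=H^s\cap L^2_+$, $\Pi$ the Szegő projector. $H_u(h)=\Pi(u\bar h)$ (antilinear Hankel operator), $T_z$ multiplication by $z$, $K_u=H_uT_z$. The right-hand side $\frac x{2i}wH_uw$ is the Hamiltonian vector field of $u\mapsto J(x)(u)=((I-xH_u^2)^{-1}(1)|1)$ for the symplectic form $4\,\mathrm{Im}(u|v)$. *)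

theory Defs
  imports "HOL-Analysis.Analysis"
begin

text \<open>Functions in the Hardy space L2_+ of the circle are represented by their
  Fourier coefficients: u = sum over n >= 0 of u n z^n, i.e. a sequence nat => complex.\<close>

type_synonym hardy = "nat \<Rightarrow> complex"

text \<open>Sobolev weight (1+n)^(2s) (equivalent to the usual <n>^(2s) weight).\<close>
definition in_Hs :: "real \<Rightarrow> hardy \<Rightarrow> bool" where
  "in_Hs r f \<longleftrightarrow> summable (\<lambda>n. ((1 + real n) powr (2*r)) * (cmod (f n))^2)"

abbreviation L2plus :: "hardy \<Rightarrow> bool" where
  "L2plus f \<equiv> in_Hs 0 f"

definition hs_norm :: "real \<Rightarrow> hardy \<Rightarrow> real" where
  "hs_norm r f = sqrt (\<Sum>n. ((1 + real n) powr (2*r)) * (cmod (f n))^2)"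

definition hs_has_deriv :: "real \<Rightarrow> (real \<Rightarrow> hardy) \<Rightarrow> hardy \<Rightarrow> real \<Rightarrow> bool" where
  "hs_has_deriv s u u' t \<longleftrightarrow> in_Hs s u' \<and>
     ((\<lambda>\<tau>. hs_norm s (\<lambda>n. (u (t + \<tau>) n - u t n) / complex_of_real \<tau> - u' n)) \<longlongrightarrow> 0) (at 0)"

definition smooth_Hs_curve :: "real \<Rightarrow> (real \<Rightarrow> hardy) \<Rightarrow> bool" where
  "smooth_Hs_curve s u \<longleftrightarrow> (\<exists>D :: nat \<Rightarrow> real \<Rightarrow> hardy. D 0 = u \<and>
     (\<forall>k t. in_Hs s (D k t) \<and> hs_has_deriv s (D k) (D (Suc k) t) t))"

definition one_h :: hardy where
  "one_h = (\<lambda>n. if n = 0 then 1 else 0)"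

text \<open>Product of two elements of L2_+ (Cauchy product of Fourier coefficients).\<close>
definition hmult :: "hardy \<Rightarrow> hardy \<Rightarrow> hardy" where
  "hmult f g = (\<lambda>n. \<Sum>k\<le>n. f k * g (n - k))"

text \<open>Pi (conj w * h): Szego projection of conj(w) h.\<close>
definition Pi_conj_mult :: "hardy \<Rightarrow> hardy \<Rightarrow> hardy" where
  "Pi_conj_mult w h = (\<lambda>n. \<Sum>k. cnj (w k) * h (n + k))"

text \<open>Hankel operator H_u h = Pi (u conj h).\<close>
definition hankel :: "hardy \<Rightarrow> hardy \<Rightarrow> hardy" where
  "hankel u h = (\<lambda>n. \<Sum>k. u (n + k) * cnj (h k))"

text \<open>Multiplication by z.\<close>
definition Tz :: "hardy \<Rightarrow> hardy" where
  "Tz h = (\<lambda>n. if n = 0 then 0 else h (n - 1))"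

definition Kop :: "hardy \<Rightarrow> hardy \<Rightarrow> hardy" where
  "Kop u h = hankel u (Tz h)"

text \<open>I - x H_u^2 is invertible on L2_+ (bijective; bounded inverse is automatic).\<close>
definition inv_op :: "real \<Rightarrow> hardy \<Rightarrow> bool" where
  "inv_op x u \<longleftrightarrow> (\<forall>f. L2plus f \<longrightarrow>
     (\<exists>!g. L2plus g \<and> (\<lambda>n. g n - complex_of_real x * hankel u (hankel u g) n) = f))"

definition w_of :: "real \<Rightarrow> hardy \<Rightarrow> hardy" where
  "w_of x u = (THE g. L2plus g \<and> (\<lambda>n. g n - complex_of_real x * hankel u (hankel u g) n) = one_h)"

definition C_op :: "real \<Rightarrow> hardy \<Rightarrow> hardy \<Rightarrow> hardy" where
  "C_op x u h = (let w = w_of x u; v = hankel u w in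
     (\<lambda>n. complex_of_real x / (4 * \<i>) *
        (hmult w (Pi_conj_mult w h) n + complex_of_real x * hmult v (Pi_conj_mult v h) n)))"

end

theory Submission
  imports Defs
begin


lemma suminf_eq_infsum_nat:
  fixes f :: "nat \<Rightarrow> 'a::banach"
  assumes "summable (\<lambda>n. norm (f n))"
  shows "infsum f UNIV = suminf f"
  using norm_summable_imp_has_sum[OF assms, of "suminf f"] assms
  by (simp add: infsumI summable_norm_cancel summable_sums)

lemma suminf_swap:
  fixes f :: "nat \<Rightarrow> nat \<Rightarrow> 'a::banach" and g :: "nat \<Rightarrow> nat \<Rightarrow> real"
  assumes le: "\<And>i j. norm (f i j) \<le> g i j"
    and gs: "\<And>i. summable (g i)" and gss: "summable (\<lambda>i. suminf (g i))"
  shows "(\<Sum>i. \<Sum>j. f i j) = (\<Sum>j. \<Sum>i. f i j)"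
    and "\<And>j. summable (\<lambda>i. norm (f i j))"
    and "summable (\<lambda>j. \<Sum>i. norm (f i j))"
proof -
  have g0: "g i j \<ge> 0" for i j using le[of i j] norm_ge_zero[of "f i j"] by linarith
  have fs: "summable (\<lambda>j. norm (f i j))" for i
    by (rule summable_comparison_test'[OF gs[of i], where N=0]) (use le in simp)
  have g_abs: "(\<lambda>x. norm ((\<lambda>(i,j). g i j) x)) summable_on UNIV \<times> UNIV"
  proof -
    have "(\<lambda>x. norm ((\<lambda>(i,j). g i j) x)) summable_on Sigma UNIV (\<lambda>_. UNIV)"
      unfolding Infinite_Sum.abs_summable_on_Sigma_iff
    proof (intro conjI ballI)
      fix i :: nat
      show "(\<lambda>x. norm ((\<lambda>y. (\<lambda>(i, j). g i j) (i, y)) x)) summable_on UNIV"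
        using gs[of i] g0 by (simp add: summable_on_UNIV_nonneg_real_iff)
      show "(\<lambda>z. norm ((\<lambda>x. \<Sum>\<^sub>\<infinity>y\<in>UNIV. norm ((\<lambda>(i, j). g i j) (x, y))) z)) summable_on UNIV"
      proof -
        have "(\<Sum>\<^sub>\<infinity>y\<in>UNIV. norm ((\<lambda>(i, j). g i j) (x, y))) = suminf (g x)" for x
          using g0 gs[of x] by (simp add: suminf_eq_infsum_nat)
        moreover have "suminf (g x) \<ge> 0" for x using g0 gs[of x] by (simp add: suminf_nonneg)
        ultimately show ?thesis using gss
          by (simp add: summable_on_UNIV_nonneg_real_iff)
      qed
    qed
    then show ?thesis by simp
  qed
  have f_abs: "(\<lambda>x. norm ((\<lambda>(i,j). f i j) x)) summable_on UNIV \<times> UNIV"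
    by (rule Infinite_Sum.abs_summable_on_comparison_test[OF g_abs]) (use le g0 in auto)
  have f_sum_on: "(\<lambda>(i,j). f i j) summable_on UNIV \<times> UNIV"
    using f_abs by (rule Infinite_Sum.abs_summable_summable)
  have nf_sum_on: "(\<lambda>(i,j). norm (f i j)) summable_on UNIV \<times> UNIV"
    using f_abs by (simp add: case_prod_unfold)
  have nf_swap: "(\<lambda>(j,i). norm (f i j)) summable_on UNIV \<times> UNIV"
    using summable_on_swap[of "\<lambda>(i,j). norm (f i j)" UNIV UNIV] nf_sum_on
    by (simp add: case_prod_unfold)
  have col: "summable (\<lambda>i. norm (f i j))" for j
  proof -
    have "(\<lambda>i. norm (f i j)) summable_on UNIV"
      using summable_on_SigmaD1[of "\<lambda>j i. norm (f i j)" UNIV "\<lambda>_. UNIV" j] nf_swap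
      by simp
    then show ?thesis by (simp add: summable_on_UNIV_nonneg_real_iff)
  qed
  then show "\<And>j. summable (\<lambda>i. norm (f i j))" .
  have sw: "infsum (\<lambda>i. infsum (\<lambda>j. f i j) UNIV) UNIV = infsum (\<lambda>j. infsum (\<lambda>i. f i j) UNIV) UNIV"
    by (rule infsum_swap_banach[OF f_sum_on])
  have nsw: "infsum (\<lambda>i. infsum (\<lambda>j. norm (f i j)) UNIV) UNIV = infsum (\<lambda>j. infsum (\<lambda>i. norm (f i j)) UNIV) UNIV"
    by (rule infsum_swap_banach[OF nf_sum_on])
  have sumj: "(\<lambda>j. \<Sum>i. norm (f i j)) summable_on UNIV"
  proof -
    have "(\<lambda>j. infsum (\<lambda>i. norm (f i j)) UNIV) summable_on UNIV"
      using summable_on_Sigma_banach[of "\<lambda>j i. norm (f i j)" UNIV "\<lambda>_. UNIV"] nf_swap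
      by (auto simp: case_prod_unfold)
    moreover have "infsum (\<lambda>i. norm (f i j)) UNIV = (\<Sum>i. norm (f i j))" for j
      using col[of j] by (simp add: suminf_eq_infsum_nat)
    ultimately show ?thesis by simp
  qed
  then show "summable (\<lambda>j. \<Sum>i. norm (f i j))"
    by (simp add: summable_on_UNIV_nonneg_real_iff suminf_nonneg col)
  have sumi: "summable (\<lambda>i. \<Sum>j. norm (f i j))"
  proof -
    have "(\<lambda>i. infsum (\<lambda>j. norm (f i j)) UNIV) summable_on UNIV"
      using summable_on_Sigma_banach[of "\<lambda>i j. norm (f i j)" UNIV "\<lambda>_. UNIV"] nf_sum_on
      by (auto simp: case_prod_unfold)
    moreover have "infsum (\<lambda>j. norm (f i j)) UNIV = (\<Sum>j. norm (f i j))" for i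
      using fs[of i] by (simp add: suminf_eq_infsum_nat)
    ultimately show ?thesis by (simp add: summable_on_UNIV_nonneg_real_iff suminf_nonneg fs)
  qed
  have "(\<Sum>i. \<Sum>j. f i j) = infsum (\<lambda>i. infsum (\<lambda>j. f i j) UNIV) UNIV"
  proof -
    have "infsum (\<lambda>j. f i j) UNIV = (\<Sum>j. f i j)" for i using fs[of i] by (simp add: suminf_eq_infsum_nat)
    moreover have "summable (\<lambda>i. norm (\<Sum>j. f i j))"
      by (rule summable_comparison_test'[OF sumi]) (use fs in \<open>auto intro: summable_norm\<close>)
    ultimately show ?thesis by (simp add: suminf_eq_infsum_nat)
  qed
  also have "\<dots> = infsum (\<lambda>j. infsum (\<lambda>i. f i j) UNIV) UNIV" by (rule sw)
  also have "\<dots> = (\<Sum>j. \<Sum>i. f i j)"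
  proof -
    have "infsum (\<lambda>i. f i j) UNIV = (\<Sum>i. f i j)" for j using col[of j] by (simp add: suminf_eq_infsum_nat)
    moreover have "summable (\<lambda>j. norm (\<Sum>i. f i j))"
      by (rule summable_comparison_test'[OF \<open>summable (\<lambda>j. \<Sum>i. norm (f i j))\<close>])
        (use col in \<open>auto intro: summable_norm\<close>)
    ultimately show ?thesis by (simp add: suminf_eq_infsum_nat)
  qed
  finally show "(\<Sum>i. \<Sum>j. f i j) = (\<Sum>j. \<Sum>i. f i j)" .
qed



lemma term_le_suminf:
  fixes f :: "nat \<Rightarrow> real"
  assumes "summable f" "\<And>n. f n \<ge> 0"
  shows "f n \<le> suminf f"
  using sum_le_suminf[OF assms(1), of "{n}"] assms(2) by auto

lemma in_Hs0_iff: "in_Hs 0 f \<longleftrightarrow> summable (\<lambda>n. (norm (f n))^2)"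
proof -
  have "(1 + real n) powr (2*0) = 1" for n by simp
  then show ?thesis unfolding in_Hs_def by simp
qed

lemma hs_norm0: "hs_norm 0 f = sqrt (\<Sum>n. (norm (f n))^2)"
  unfolding hs_norm_def by simp

lemma l2_bounded:
  assumes "summable (\<lambda>n. (norm (f n))^2)"
  shows "norm (f n) \<le> sqrt (\<Sum>n. (norm (f n))^2)"
proof -
  have "(norm (f n))^2 \<le> (\<Sum>n. (norm (f n))^2)"
    by (rule term_le_suminf[OF assms]) simp
  then show ?thesis by (metis norm_ge_zero real_le_rsqrt)
qed

lemma l1_bounded:
  assumes "summable (\<lambda>n. norm (f n))"
  shows "norm (f n) \<le> (\<Sum>n. norm (f n))"
  by (rule term_le_suminf[OF assms]) simp

lemma l1_shift:
  assumes "summable (\<lambda>n. norm (f n))"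
  shows "summable (\<lambda>k. norm (f (c + k)))" and "(\<Sum>k. norm (f (c + k))) \<le> (\<Sum>n. norm (f n))"
proof -
  have s: "summable (\<lambda>k. norm (f (k + c)))" using assms by (rule summable_ignore_initial_segment)
  then show "summable (\<lambda>k. norm (f (c + k)))" by (simp add: add.commute)
  have "(\<Sum>k. norm (f (k + c))) = (\<Sum>n. norm (f n)) - (\<Sum>i<c. norm (f i))"
    by (rule suminf_minus_initial_segment[OF assms])
  moreover have "(\<Sum>i<c. norm (f i)) \<ge> 0" by (simp add: sum_nonneg)
  ultimately show "(\<Sum>k. norm (f (c + k))) \<le> (\<Sum>n. norm (f n))" by (simp add: add.commute)
qed

lemma summable_powr_shift:
  assumes "a < -1"
  shows "summable (\<lambda>n. (1 + real n) powr a)"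
proof -
  have "summable (\<lambda>n. real n powr a)" using assms by (simp add: summable_real_powr_iff)
  then have "summable (\<lambda>n. real (n + 1) powr a)" by (subst summable_iff_shift) 
  then show ?thesis by (simp add: add.commute)
qed

lemma Hs_l1:
  assumes s: "s > 1/2" and f: "in_Hs s f"
  shows "summable (\<lambda>n. norm (f n))"
proof (rule summable_comparison_test'[where N=0])
  let ?g = "\<lambda>n. ((1 + real n) powr (2 * s)) * (norm (f n))^2 + (1 + real n) powr (-2 * s)"
  show "summable ?g"
    using f summable_powr_shift[of "-2 * s"] s unfolding in_Hs_def by (intro summable_add) auto
  fix n :: nat
  define t where "t = (1 + real n) powr s"
  have t: "t > 0" unfolding t_def by simp
  have e1: "(1 + real n) powr (2 * s) = t^2"
    unfolding t_def by (simp add: power2_eq_square powr_add[symmetric])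
  have e2: "(1 + real n) powr (-2 * s) = 1 / t^2"
    using e1 by (simp add: powr_minus[of _ "2 * s", simplified] divide_inverse)
  have "0 \<le> (t * norm (f n) - 1/t)^2" by simp
  then have "2 * norm (f n) \<le> t^2 * (norm (f n))^2 + 1/t^2"
    using t by (simp add: power2_eq_square field_simps)
  then show "norm (norm (f n)) \<le> ?g n" using e1 e2 norm_ge_zero[of "f n"] by (simp; linarith)
qed

lemma Hs_l2:
  assumes s: "s \<ge> 0" and f: "in_Hs s f"
  shows "summable (\<lambda>n. (norm (f n))^2)"
proof (rule summable_comparison_test'[where N=0])
  show "summable (\<lambda>n. ((1 + real n) powr (2 * s)) * (norm (f n))^2)" using f unfolding in_Hs_def .
  fix n :: nat
  have "1 \<le> (1 + real n) powr (2 * s)" using s by (intro ge_one_powr_ge_zero) auto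
  then show "norm ((norm (f n))^2) \<le> ((1 + real n) powr (2 * s)) * (norm (f n))^2"
    by (simp add: mult_le_cancel_right1)
qed

lemma suminf_cnj:
  assumes "summable f"
  shows "(\<Sum>n. cnj (f n)) = cnj (\<Sum>n. f n)"
  using sums_cnj[of f "suminf f"] assms by (simp add: summable_sums sums_iff)

lemma suminf_shift0:
  fixes g :: "nat \<Rightarrow> 'a::{real_normed_vector}"
  assumes "g 0 = 0" "summable (\<lambda>k. g (Suc k))"
  shows "suminf g = (\<Sum>k. g (Suc k))"
  using suminf_split_head[of g] assms by (simp add: summable_Suc_iff)



definition nrm1 :: "hardy \<Rightarrow> real" where "nrm1 f = (\<Sum>n. norm (f n))"

abbreviation l1 :: "hardy \<Rightarrow> bool" where "l1 f \<equiv> summable (\<lambda>n. norm (f n))"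

lemma nrm1_nonneg: "l1 f \<Longrightarrow> nrm1 f \<ge> 0"
  unfolding nrm1_def by (simp add: suminf_nonneg)

lemma l1_le_nrm1: "l1 f \<Longrightarrow> norm (f n) \<le> nrm1 f"
  unfolding nrm1_def by (rule l1_bounded)

lemma hankel_summable_norm:
  assumes u: "l1 u" and g: "\<And>k. norm (g k) \<le> B"
  shows "summable (\<lambda>k. norm (u (n + k) * cnj (g k)))"
proof (rule summable_comparison_test'[where N=0])
  show "summable (\<lambda>k. B * norm (u (n + k)))" using l1_shift(1)[OF u] by (rule summable_mult)
  fix k
  have "norm (u (n + k)) * norm (g k) \<le> norm (u (n + k)) * B"
    by (rule mult_left_mono[OF g[of k] norm_ge_zero])
  then show "norm (norm (u (n + k) * cnj (g k))) \<le> B * norm (u (n + k))"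
    by (simp add: norm_mult mult.commute)
qed

lemma hankel_summable:
  assumes u: "l1 u" and g: "\<And>k. norm (g k) \<le> B"
  shows "summable (\<lambda>k. u (n + k) * cnj (g k))"
  by (rule summable_norm_cancel[OF hankel_summable_norm[OF assms]])

lemma hankel_bound:
  assumes u: "l1 u" and g: "\<And>k. norm (g k) \<le> B"
  shows "norm (hankel u g n) \<le> B * nrm1 u"
proof -
  have "norm (hankel u g n) \<le> (\<Sum>k. norm (u (n + k) * cnj (g k)))"
    unfolding hankel_def by (rule summable_norm[OF hankel_summable_norm[OF assms]])
  also have "\<dots> \<le> (\<Sum>k. B * norm (u (n + k)))"
  proof (rule suminf_le)
    show "summable (\<lambda>k. norm (u (n + k) * cnj (g k)))" by (rule hankel_summable_norm[OF assms])
    show "summable (\<lambda>k. B * norm (u (n + k)))" using l1_shift(1)[OF u] by (rule summable_mult)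
    fix k
    have "norm (u (n + k)) * norm (g k) \<le> norm (u (n + k)) * B"
      by (rule mult_left_mono[OF g[of k] norm_ge_zero])
    then show "norm (u (n + k) * cnj (g k)) \<le> B * norm (u (n + k))"
      by (simp add: norm_mult mult.commute)
  qed
  also have "\<dots> = B * (\<Sum>k. norm (u (n + k)))"
    using l1_shift(1)[OF u] by (rule suminf_mult)
  also have "\<dots> \<le> B * nrm1 u"
    unfolding nrm1_def by (rule mult_left_mono[OF l1_shift(2)[OF u] order_trans[OF norm_ge_zero[of "g 0"] g[of 0]]])
  finally show ?thesis .
qed

lemma l1_bounded_nrm: "l1 g \<Longrightarrow> \<forall>k. norm (g k) \<le> nrm1 g"
  using l1_le_nrm1 by blast

lemma hankel_l1:
  assumes u: "l1 u" and g: "l1 g"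
  shows "l1 (hankel u g)" and "nrm1 (hankel u g) \<le> nrm1 u * nrm1 g"
proof -
  define G where "G k n = norm (g k) * norm (u (n + k))" for k n
  have G0: "G k n \<ge> 0" for k n unfolding G_def by simp
  have Gs: "summable (G k)" for k
    unfolding G_def using l1_shift(1)[OF u, of k] by (intro summable_mult) (simp add: add.commute)
  have Gsum: "suminf (G k) \<le> norm (g k) * nrm1 u" for k
  proof -
    have "suminf (G k) = norm (g k) * (\<Sum>n. norm (u (k + n)))"
      unfolding G_def using l1_shift(1)[OF u, of k] by (subst suminf_mult) (simp_all add: add.commute)
    also have "\<dots> \<le> norm (g k) * nrm1 u"
      unfolding nrm1_def using l1_shift(2)[OF u] by (intro mult_left_mono) auto
    finally show ?thesis .
  qed
  have Gss: "summable (\<lambda>k. suminf (G k))"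
  proof (rule summable_comparison_test'[where N=0])
    show "summable (\<lambda>k. norm (g k) * nrm1 u)" using g by (rule summable_mult2)
    fix k show "norm (suminf (G k)) \<le> norm (g k) * nrm1 u"
      using Gsum[of k] suminf_nonneg[OF Gs G0] by simp
  qed
  note sw = suminf_swap[of G G, OF _ Gs Gss, simplified, OF G0]
  have col: "summable (\<lambda>n. \<Sum>k. G k n)" using sw(3) G0 by simp
  have pt: "norm (hankel u g n) \<le> (\<Sum>k. G k n)" for n
  proof -
    have "norm (hankel u g n) \<le> (\<Sum>k. norm (u (n + k) * cnj (g k)))"
      unfolding hankel_def
      by (rule summable_norm[OF hankel_summable_norm[OF u l1_le_nrm1[OF g]]])
    also have "\<dots> = (\<Sum>k. G k n)" unfolding G_def by (simp add: norm_mult mult.commute)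
    finally show ?thesis .
  qed
  show l1h: "l1 (hankel u g)"
    by (rule summable_comparison_test'[OF col, where N=0]) (use pt in simp)
  have "nrm1 (hankel u g) \<le> (\<Sum>n. \<Sum>k. G k n)"
    unfolding nrm1_def by (rule suminf_le[OF pt l1h col])
  also have "\<dots> = (\<Sum>k. \<Sum>n. G k n)" using sw(1) by simp
  also have "\<dots> \<le> (\<Sum>k. norm (g k) * nrm1 u)"
    by (rule suminf_le[OF Gsum Gss]) (use g in \<open>rule summable_mult2\<close>)
  also have "\<dots> = nrm1 g * nrm1 u" unfolding nrm1_def[of g] using g by (rule suminf_mult2[symmetric])
  finally show "nrm1 (hankel u g) \<le> nrm1 u * nrm1 g" by (simp add: mult.commute)
qed

lemma l1_bdd: "l1 g \<Longrightarrow> norm (g k) \<le> nrm1 g" by (rule l1_le_nrm1)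

lemma hankel_add_sym:
  assumes "l1 a" "l1 b" "\<And>k. norm (g k) \<le> B"
  shows "hankel (\<lambda>m. a m + b m) g n = hankel a g n + hankel b g n"
  unfolding hankel_def
  using suminf_add[OF hankel_summable[OF assms(1,3)] hankel_summable[OF assms(2,3)]]
  by (simp add: distrib_right)

lemma hankel_add_arg:
  assumes "l1 a" "\<And>k. norm (g1 k) \<le> B1" "\<And>k. norm (g2 k) \<le> B2"
  shows "hankel a (\<lambda>m. g1 m + g2 m) n = hankel a g1 n + hankel a g2 n"
  unfolding hankel_def
  using suminf_add[OF hankel_summable[OF assms(1,2)] hankel_summable[OF assms(1,3)]]
  by (simp add: distrib_left)

lemma hankel_diff_arg:
  assumes "l1 a" "\<And>k. norm (g1 k) \<le> B1" "\<And>k. norm (g2 k) \<le> B2"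
  shows "hankel a (\<lambda>m. g1 m - g2 m) n = hankel a g1 n - hankel a g2 n"
  unfolding hankel_def
  using suminf_diff[OF hankel_summable[OF assms(1,2)] hankel_summable[OF assms(1,3)]]
  by (simp add: right_diff_distrib)

lemma hankel_scale_arg:
  assumes "l1 a" "\<And>k. norm (g k) \<le> B"
  shows "hankel a (\<lambda>m. c * g m) n = cnj c * hankel a g n"
proof -
  have "summable (\<lambda>k. a (n + k) * cnj (g k))" by (rule hankel_summable[OF assms])
  from suminf_mult[OF this, of "cnj c"] show ?thesis unfolding hankel_def by (simp add: ac_simps)
qed



lemma summable_cnj':
  "summable f \<Longrightarrow> summable (\<lambda>n. cnj (f n))"
  using sums_cnj[of f] unfolding summable_def by blast

lemma suminf_shift_zero:
  fixes X :: "nat \<Rightarrow> 'a::real_normed_vector"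
  assumes "summable (\<lambda>p. X (p + j))"
  shows "(\<Sum>k. if j \<le> k then X k else 0) = (\<Sum>p. X (p + j))"
proof -
  let ?f = "\<lambda>k. if j \<le> k then X k else 0"
  have e: "(\<lambda>p. ?f (p + j)) = (\<lambda>p. X (p + j))" by auto
  have s: "summable ?f" using assms e summable_iff_shift[of ?f j] by simp
  have "(\<Sum>p. ?f (p + j)) = suminf ?f - (\<Sum>i<j. ?f i)" by (rule suminf_minus_initial_segment[OF s])
  moreover have "(\<Sum>i<j. ?f i) = 0" by simp
  ultimately show ?thesis using e by simp
qed

lemma suminf_finite_le:
  fixes F :: "nat \<Rightarrow> 'a::real_normed_vector"
  shows "(\<Sum>j. if j \<le> k then F j else 0) = (\<Sum>j\<le>k. F j)"
  by (subst suminf_finite[of "{..k}"]) auto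

lemma triangle:
  fixes F :: "nat \<Rightarrow> nat \<Rightarrow> 'a::banach"
  assumes le: "\<And>j p. norm (F (j + p) j) \<le> Gd j p"
    and gs: "\<And>j. summable (Gd j)" and gss: "summable (\<lambda>j. suminf (Gd j))"
  shows "(\<Sum>k. \<Sum>j\<le>k. F k j) = (\<Sum>j. \<Sum>p. F (j + p) j)"
proof -
  define E where "E j k = (if j \<le> k then F k j else 0)" for j k
  define g where "g j k = (if j \<le> k then Gd j (k - j) else 0)" for j k
  have le': "norm (E j k) \<le> g j k" for j k
  proof (cases "j \<le> k")
    case True
    then have "k = j + (k - j)" by simp
    then have "norm (F k j) \<le> Gd j (k - j)" using le[of j "k - j"] by metis
    then show ?thesis using True unfolding E_def g_def by simp
  next
    case False
    then show ?thesis unfolding E_def g_def by simp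
  qed
  have gshift: "(\<lambda>p. g j (p + j)) = Gd j" for j unfolding g_def by auto
  have gsum: "summable (g j)" and gsum_eq: "suminf (g j) = suminf (Gd j)" for j
  proof -
    show "summable (g j)" using gs[of j] gshift[of j] summable_iff_shift[of "g j" j] by simp
    have "suminf (g j) = (\<Sum>k. if j \<le> k then g j k else 0)" unfolding g_def by (simp cong: if_cong)
    also have "\<dots> = (\<Sum>p. g j (p + j))"
      by (rule suminf_shift_zero) (use gs[of j] gshift[of j] in simp)
    finally show "suminf (g j) = suminf (Gd j)" using gshift[of j] by simp
  qed
  have gss': "summable (\<lambda>j. suminf (g j))" using gss gsum_eq by simp
  have sw: "(\<Sum>j. \<Sum>k. E j k) = (\<Sum>k. \<Sum>j. E j k)"
    by (rule suminf_swap(1)[OF le' gsum gss'])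
  have "(\<Sum>j\<le>k. F k j) = (\<Sum>j. E j k)" for k
    unfolding E_def by (rule suminf_finite_le[symmetric])
  then have "(\<Sum>k. \<Sum>j\<le>k. F k j) = (\<Sum>j. \<Sum>k. E j k)" using sw by simp
  also have "\<dots> = (\<Sum>j. \<Sum>p. F (j + p) j)"
  proof -
    have "(\<Sum>k. E j k) = (\<Sum>p. F (j + p) j)" for j
    proof -
      have "summable (\<lambda>p. F (p + j) j)"
      proof (rule summable_norm_cancel, rule summable_comparison_test'[OF gs[of j], where N=0])
        fix p show "norm (norm (F (p + j) j)) \<le> Gd j p" using le[of j p] by (simp add: add.commute)
      qed
      then have "(\<Sum>k. E j k) = (\<Sum>p. F (p + j) j)" unfolding E_def by (rule suminf_shift_zero)
      then show ?thesis by (simp add: add.commute)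
    qed
    then show ?thesis by simp
  qed
  finally show ?thesis .
qed

lemma Kop_eq:
  assumes u: "l1 u" and h: "\<And>k. norm (h k) \<le> B"
  shows "Kop u h n = (\<Sum>k. u (n + Suc k) * cnj (h k))"
proof -
  have tb: "norm (Tz h k) \<le> B" for k
    unfolding Tz_def using h[of "k - 1"] order_trans[OF norm_ge_zero h[of 0]] by auto
  have s: "summable (\<lambda>k. u (n + k) * cnj (Tz h k))" by (rule hankel_summable[OF u tb])
  then have s': "summable (\<lambda>k. u (n + Suc k) * cnj (Tz h (Suc k)))"
    using summable_Suc_iff[of "\<lambda>k. u (n + k) * cnj (Tz h k)"] by simp
  have "Kop u h n = (\<Sum>k. u (n + k) * cnj (Tz h k))" unfolding Kop_def hankel_def by simp
  also have "\<dots> = (\<Sum>k. u (n + Suc k) * cnj (Tz h (Suc k)))"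
    by (rule suminf_shift0) (use s' in \<open>simp_all add: Tz_def\<close>)
  also have "\<dots> = (\<Sum>k. u (n + Suc k) * cnj (h k))" by (simp add: Tz_def)
  finally show ?thesis .
qed

lemma Kop_summable:
  assumes u: "l1 u" and h: "\<And>k. norm (h k) \<le> B"
  shows "summable (\<lambda>k. u (n + Suc k) * cnj (h k))"
proof -
  have "summable (\<lambda>k. u (Suc n + k) * cnj (h k))" by (rule hankel_summable[OF u h])
  then show ?thesis by simp
qed

lemma Kop_bound:
  assumes u: "l1 u" and h: "\<And>k. norm (h k) \<le> B"
  shows "norm (Kop u h n) \<le> B * nrm1 u"
proof -
  have "Kop u h n = hankel u h (Suc n)" using Kop_eq[OF assms] unfolding hankel_def by simp
  then show ?thesis using hankel_bound[OF assms] by simp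
qed

lemma Pi_summable:
  assumes a: "l1 a" and h: "\<And>k. norm (h k) \<le> B"
  shows "summable (\<lambda>m. cnj (a m) * h (p + m))" and "norm (Pi_conj_mult a h p) \<le> B * nrm1 a"
proof -
  have hb: "norm (h (p + m)) \<le> B" for m using h by simp
  have e: "cnj (a m) * h (p + m) = cnj (a (0 + m) * cnj (h (p + m)))" for m by simp
  have "summable (\<lambda>m. a (0 + m) * cnj (h (p + m)))"
    by (rule hankel_summable[OF a, of "\<lambda>m. h (p + m)"]) (use hb in auto)
  then have "summable (\<lambda>m. cnj (a (0 + m) * cnj (h (p + m))))"
    by (rule summable_cnj')
  then show "summable (\<lambda>m. cnj (a m) * h (p + m))" by simp
  have "norm (hankel a (\<lambda>m. h (p + m)) 0) \<le> B * nrm1 a"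
    by (rule hankel_bound[OF a]) (use hb in auto)
  moreover have "Pi_conj_mult a h p = cnj (hankel a (\<lambda>m. h (p + m)) 0)"
    unfolding Pi_conj_mult_def hankel_def
    using suminf_cnj[OF \<open>summable (\<lambda>m. a (0 + m) * cnj (h (p + m)))\<close>] by simp
  ultimately show "norm (Pi_conj_mult a h p) \<le> B * nrm1 a" by simp
qed



lemma dom1:
  assumes u: "l1 u" and K: "K \<ge> 0"
  shows "summable (\<lambda>k. K * norm (u (c + k)))" and "(\<Sum>k. K * norm (u (c + k))) \<le> K * nrm1 u"
proof -
  show s: "summable (\<lambda>k. K * norm (u (c + k)))" using l1_shift(1)[OF u] by (rule summable_mult)
  have "(\<Sum>k. K * norm (u (c + k))) = K * (\<Sum>k. norm (u (c + k)))"
    using l1_shift(1)[OF u] by (rule suminf_mult)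
  also have "\<dots> \<le> K * nrm1 u" unfolding nrm1_def by (rule mult_left_mono[OF l1_shift(2)[OF u] K])
  finally show "(\<Sum>k. K * norm (u (c + k))) \<le> K * nrm1 u" .
qed

lemma PiK:
  assumes a: "l1 a" and u: "l1 u" and h: "\<And>k. norm (h k) \<le> B"
  shows "Pi_conj_mult a (Kop u h) p = (\<Sum>k. cnj (h k) * hankel u a (p + Suc k))"
proof -
  have B0: "B \<ge> 0" using order_trans[OF norm_ge_zero h[of 0]] .
  define f where "f m k = cnj (a m) * (u (Suc (p + m) + k) * cnj (h k))" for m k
  define g where "g m k = norm (a m) * B * norm (u (Suc (p + m) + k))" for m k
  have le: "norm (f m k) \<le> g m k" for m k
  proof -
    have "norm (a m) * norm (u (Suc (p + m) + k)) * norm (h k) \<le> norm (a m) * norm (u (Suc (p + m) + k)) * B"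
      by (rule mult_left_mono[OF h[of k]]) simp
    then show ?thesis unfolding f_def g_def by (simp add: norm_mult ac_simps)
  qed
  have gs: "summable (g m)" for m
    unfolding g_def using dom1(1)[OF u, of "norm (a m) * B" "Suc (p + m)"] B0 by simp
  have gsum: "suminf (g m) \<le> norm (a m) * B * nrm1 u" for m
    unfolding g_def using dom1(2)[OF u, of "norm (a m) * B" "Suc (p + m)"] B0 by simp
  have gss: "summable (\<lambda>m. suminf (g m))"
  proof (rule summable_comparison_test'[where N=0])
    show "summable (\<lambda>m. norm (a m) * B * nrm1 u)" using a by (intro summable_mult2)
    fix m show "norm (suminf (g m)) \<le> norm (a m) * B * nrm1 u"
      using gsum[of m] suminf_nonneg[OF gs[of m]] B0 unfolding g_def by auto
  qed
  have "Pi_conj_mult a (Kop u h) p = (\<Sum>m. cnj (a m) * Kop u h (p + m))"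
    unfolding Pi_conj_mult_def ..
  also have "\<dots> = (\<Sum>m. \<Sum>k. f m k)"
  proof -
    have "cnj (a m) * Kop u h (p + m) = (\<Sum>k. f m k)" for m
    proof -
      have "Kop u h (p + m) = (\<Sum>k. u (Suc (p + m) + k) * cnj (h k))"
        using Kop_eq[OF u h, where n="p + m"] by simp
      moreover have "summable (\<lambda>k. u (Suc (p + m) + k) * cnj (h k))"
        by (rule hankel_summable[OF u h])
      ultimately show ?thesis unfolding f_def by (simp add: suminf_mult)
    qed
    then show ?thesis by simp
  qed
  also have "\<dots> = (\<Sum>k. \<Sum>m. f m k)" by (rule suminf_swap(1)[OF le gs gss])
  also have "\<dots> = (\<Sum>k. cnj (h k) * hankel u a (p + Suc k))"
  proof -
    have "(\<Sum>m. f m k) = cnj (h k) * hankel u a (p + Suc k)" for k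
    proof -
      have s: "summable (\<lambda>m. u (p + Suc k + m) * cnj (a m))"
        by (rule hankel_summable[OF u l1_le_nrm1[OF a]])
      have "(\<Sum>m. f m k) = (\<Sum>m. cnj (h k) * (u (p + Suc k + m) * cnj (a m)))"
        unfolding f_def by (simp add: ac_simps)
      also have "\<dots> = cnj (h k) * (\<Sum>m. u (p + Suc k + m) * cnj (a m))"
        using s by (rule suminf_mult)
      finally show ?thesis unfolding hankel_def .
    qed
    then show ?thesis by simp
  qed
  finally show ?thesis .
qed


lemma hmult_bound:
  assumes a: "l1 a" and P: "\<And>k. norm (P k) \<le> C"
  shows "norm (hmult a P k) \<le> nrm1 a * C"
proof -
  have C0: "C \<ge> 0" using order_trans[OF norm_ge_zero P[of 0]] .
  have "norm (hmult a P k) \<le> (\<Sum>j\<le>k. norm (a j * P (k - j)))"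
    unfolding hmult_def by (rule norm_sum)
  also have "\<dots> \<le> (\<Sum>j\<le>k. norm (a j) * C)"
    by (rule sum_mono) (simp add: norm_mult mult_left_mono P)
  also have "\<dots> = (\<Sum>j\<le>k. norm (a j)) * C" by (simp add: sum_distrib_right)
  also have "\<dots> \<le> nrm1 a * C"
    unfolding nrm1_def by (rule mult_right_mono[OF sum_le_suminf[OF a] C0]) auto
  finally show ?thesis .
qed

lemma KPi:
  assumes a: "l1 a" and u: "l1 u" and h: "\<And>k. norm (h k) \<le> B"
  shows "Kop u (hmult a (Pi_conj_mult a h)) n
       = (\<Sum>q. cnj (h q) * (\<Sum>m\<le>q. a m * hankel u a (n + Suc (q - m))))"
proof -
  have B0: "B \<ge> 0" using order_trans[OF norm_ge_zero h[of 0]] .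
  have a0: "nrm1 a \<ge> 0" using a by (rule nrm1_nonneg)
  have u0: "nrm1 u \<ge> 0" using u by (rule nrm1_nonneg)
  define P where "P = Pi_conj_mult a h"
  define C0 where "C0 = B * nrm1 a"
  have C00: "C0 \<ge> 0" unfolding C0_def using B0 a0 by simp
  have Pb: "norm (P r) \<le> C0" for r unfolding P_def C0_def by (rule Pi_summable(2)[of a h B, OF a h])
  have Pc: "cnj (P p) = (\<Sum>m. a m * cnj (h (p + m)))" for p
  proof -
    have "cnj (P p) = (\<Sum>m. cnj (cnj (a m) * h (p + m)))"
      unfolding P_def Pi_conj_mult_def using suminf_cnj[OF Pi_summable(1)[of a h B p, OF a h]] by simp
    then show ?thesis by simp
  qed
  have Pcs: "summable (\<lambda>m. a m * cnj (h (p + m)))" for p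
    using summable_cnj'[OF Pi_summable(1)[of a h B p, OF a h]] by simp
  define T where "T j p m = u (Suc (n + j) + p) * cnj (a j) * (a m * cnj (h (p + m)))" for j p m
  have Tle: "norm (T j p m) \<le> norm (u (Suc (n + j) + p)) * norm (a j) * norm (a m) * B" for j p m
  proof -
    have "norm (a m) * norm (h (p + m)) \<le> norm (a m) * B" by (rule mult_left_mono[OF h]) simp
    then have "norm (u (Suc (n + j) + p)) * norm (a j) * (norm (a m) * norm (h (p + m)))
        \<le> norm (u (Suc (n + j) + p)) * norm (a j) * (norm (a m) * B)"
      by (rule mult_left_mono) simp
    then show ?thesis unfolding T_def by (simp add: norm_mult ac_simps)
  qed
  have Xb: "norm (hmult a P k) \<le> nrm1 a * C0" for k by (rule hmult_bound[OF a Pb])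
  have "Kop u (hmult a P) n = (\<Sum>k. u (n + Suc k) * cnj (hmult a P k))"
    by (rule Kop_eq[OF u Xb])
  also have "\<dots> = (\<Sum>k. \<Sum>j\<le>k. u (n + Suc k) * (cnj (a j) * cnj (P (k - j))))"
    unfolding hmult_def by (simp add: sum_distrib_left)
  also have "\<dots> = (\<Sum>j. \<Sum>p. u (n + Suc (j + p)) * (cnj (a j) * cnj (P p)))"
  proof -
    define Gd where "Gd j p = norm (a j) * C0 * norm (u (Suc (n + j) + p))" for j p
    have le: "norm (u (n + Suc (j + p)) * (cnj (a j) * cnj (P ((j + p) - j)))) \<le> Gd j p" for j p
    proof -
      have "norm (a j) * norm (P p) \<le> norm (a j) * C0" by (rule mult_left_mono[OF Pb]) simp
      then have "norm (u (Suc (n + j) + p)) * (norm (a j) * norm (P p)) \<le> norm (u (Suc (n + j) + p)) * (norm (a j) * C0)"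
        by (rule mult_left_mono) simp
      then show ?thesis unfolding Gd_def by (simp add: norm_mult ac_simps)
    qed
    have gs: "summable (Gd j)" for j
      unfolding Gd_def using dom1(1)[OF u, of "norm (a j) * C0" "Suc (n + j)"] C00 by simp
    have gsum: "suminf (Gd j) \<le> norm (a j) * C0 * nrm1 u" for j
      unfolding Gd_def using dom1(2)[OF u, of "norm (a j) * C0" "Suc (n + j)"] C00 by simp
    have gss: "summable (\<lambda>j. suminf (Gd j))"
    proof (rule summable_comparison_test'[where N=0])
      show "summable (\<lambda>j. norm (a j) * C0 * nrm1 u)" using a by (intro summable_mult2)
      fix j show "norm (suminf (Gd j)) \<le> norm (a j) * C0 * nrm1 u"
        using gsum[of j] suminf_nonneg[OF gs[of j]] C00 unfolding Gd_def by auto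
    qed
    show ?thesis using triangle[of "\<lambda>k j. u (n + Suc k) * (cnj (a j) * cnj (P (k - j)))", OF le gs gss]
      by simp
  qed
  also have "\<dots> = (\<Sum>j. \<Sum>p. \<Sum>m. T j p m)"
  proof -
    have "u (n + Suc (j + p)) * (cnj (a j) * cnj (P p)) = (\<Sum>m. T j p m)" for j p
      unfolding Pc T_def using suminf_mult[OF Pcs[of p], of "u (Suc (n + j) + p) * cnj (a j)"]
      by (simp add: ac_simps)
    then show ?thesis by simp
  qed
  also have "\<dots> = (\<Sum>j. \<Sum>m. \<Sum>p. T j p m)"
  proof -
    have "(\<Sum>p. \<Sum>m. T j p m) = (\<Sum>m. \<Sum>p. T j p m)" for j
    proof (rule suminf_swap(1))
      define g where "g p m = (norm (u (Suc (n + j) + p)) * norm (a j) * B) * norm (a m)" for p m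
      show "norm (T j p m) \<le> g p m" for p m using Tle[of j p m] unfolding g_def by (simp add: ac_simps)
      show "summable (g p)" for p unfolding g_def using a by (rule summable_mult)
      have "suminf (g p) = (norm (u (Suc (n + j) + p)) * norm (a j) * B) * nrm1 a" for p
        unfolding g_def nrm1_def by (rule suminf_mult[OF a])
      moreover have "summable (\<lambda>p. (norm (u (Suc (n + j) + p)) * norm (a j) * B) * nrm1 a)"
        using l1_shift(1)[OF u, of "Suc (n + j)"] by (intro summable_mult2)
      ultimately show "summable (\<lambda>p. suminf (g p))" by simp
    qed
    then show ?thesis by simp
  qed
  also have "\<dots> = (\<Sum>m. \<Sum>j. \<Sum>p. T j p m)"
  proof (rule suminf_swap(1))
    define g where "g j m = norm (a j) * (norm (a m) * B * nrm1 u)" for j m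
    show "norm (\<Sum>p. T j p m) \<le> g j m" for j m
    proof -
      have s: "summable (\<lambda>p. norm (a j) * norm (a m) * B * norm (u (Suc (n + j) + p)))"
        by (rule dom1(1)[OF u]) (use B0 in simp)
      have Tle': "norm (T j p m) \<le> norm (a j) * norm (a m) * B * norm (u (Suc (n + j) + p))" for p
        using Tle[of j p m] by (simp add: ac_simps)
      have sT: "summable (\<lambda>p. norm (T j p m))"
        by (rule summable_comparison_test'[OF s, where N=0]) (use Tle' in simp)
      have "norm (\<Sum>p. T j p m) \<le> (\<Sum>p. norm (T j p m))" by (rule summable_norm[OF sT])
      also have "\<dots> \<le> (\<Sum>p. norm (a j) * norm (a m) * B * norm (u (Suc (n + j) + p)))"
        by (rule suminf_le[OF Tle' sT s])
      also have "\<dots> \<le> norm (a j) * norm (a m) * B * nrm1 u"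
        by (rule dom1(2)[OF u]) (use B0 in simp)
      finally show ?thesis unfolding g_def by (simp add: ac_simps)
    qed
    show "summable (g j)" for j unfolding g_def using a by (intro summable_mult summable_mult2)
    have "suminf (g j) = norm (a j) * (nrm1 a * B * nrm1 u)" for j
      unfolding g_def nrm1_def[of a] using suminf_mult[OF summable_mult2[OF a, of "B * nrm1 u"], of "norm (a j)"]
        suminf_mult2[OF a, of "B * nrm1 u"] by (simp add: ac_simps)
    then show "summable (\<lambda>j. suminf (g j))" using a by (simp add: summable_mult2)
  qed
  also have "\<dots> = (\<Sum>m. \<Sum>p. \<Sum>j. T j p m)"
  proof -
    have "(\<Sum>j. \<Sum>p. T j p m) = (\<Sum>p. \<Sum>j. T j p m)" for m
    proof (rule suminf_swap(1))
      define g where "g j p = norm (a j) * norm (a m) * B * norm (u (Suc (n + j) + p))" for j p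
      show "norm (T j p m) \<le> g j p" for j p using Tle[of j p m] unfolding g_def by (simp add: ac_simps)
      show "summable (g j)" for j unfolding g_def by (rule dom1(1)[OF u]) (use B0 in simp)
      show "summable (\<lambda>j. suminf (g j))"
      proof (rule summable_comparison_test'[where N=0])
        show "summable (\<lambda>j. norm (a j) * (norm (a m) * B * nrm1 u))" using a by (rule summable_mult2)
        fix j
        have "suminf (g j) \<le> norm (a j) * norm (a m) * B * nrm1 u"
          unfolding g_def by (rule dom1(2)[OF u]) (use B0 in simp)
        moreover have "suminf (g j) \<ge> 0"
          unfolding g_def by (rule suminf_nonneg[OF dom1(1)[OF u]]) (use B0 in simp_all)
        ultimately show "norm (suminf (g j)) \<le> norm (a j) * (norm (a m) * B * nrm1 u)"
          by (simp add: ac_simps)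
      qed
    qed
    then show ?thesis by simp
  qed
  also have "\<dots> = (\<Sum>m. \<Sum>p. cnj (h (m + p)) * (a m * hankel u a (n + Suc p)))"
  proof -
    have "(\<Sum>j. T j p m) = cnj (h (m + p)) * (a m * hankel u a (n + Suc p))" for p m
    proof -
      have s: "summable (\<lambda>j. u (n + Suc p + j) * cnj (a j))"
        by (rule hankel_summable[OF u l1_le_nrm1[OF a]])
      have "(\<Sum>j. T j p m) = (\<Sum>j. (cnj (h (m + p)) * a m) * (u (n + Suc p + j) * cnj (a j)))"
        unfolding T_def by (simp add: ac_simps)
      also have "\<dots> = (cnj (h (m + p)) * a m) * (\<Sum>j. u (n + Suc p + j) * cnj (a j))"
        using s by (rule suminf_mult)
      finally show ?thesis unfolding hankel_def by (simp add: ac_simps)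
    qed
    then show ?thesis by simp
  qed
  also have "\<dots> = (\<Sum>q. \<Sum>m\<le>q. cnj (h q) * (a m * hankel u a (n + Suc (q - m))))"
  proof -
    define V where "V p = hankel u a (Suc n + p)" for p
    have lV: "l1 (hankel u a)" by (rule hankel_l1(1)[OF u a])
    have Vs: "summable (\<lambda>p. norm (V p))" unfolding V_def by (rule l1_shift(1)[OF lV])
    have Vsum: "(\<Sum>p. norm (V p)) \<le> nrm1 (hankel u a)" unfolding V_def nrm1_def by (rule l1_shift(2)[OF lV])
    define Gd where "Gd m p = B * norm (a m) * norm (V p)" for m p
    have le: "norm (cnj (h (m + p)) * (a m * hankel u a (n + Suc ((m + p) - m)))) \<le> Gd m p" for m p
    proof -
      have "norm (h (m + p)) * (norm (a m) * norm (V p)) \<le> B * (norm (a m) * norm (V p))"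
        by (rule mult_right_mono[OF h]) simp
      then show ?thesis unfolding Gd_def V_def by (simp add: norm_mult ac_simps)
    qed
    have gs: "summable (Gd m)" for m unfolding Gd_def using Vs by (rule summable_mult)
    have gsum: "suminf (Gd m) = B * norm (a m) * (\<Sum>p. norm (V p))" for m
      unfolding Gd_def using Vs by (rule suminf_mult)
    have gss: "summable (\<lambda>m. suminf (Gd m))"
      unfolding gsum using a by (intro summable_mult2 summable_mult)
    have "(\<Sum>q. \<Sum>m\<le>q. cnj (h q) * (a m * hankel u a (n + Suc (q - m))))
        = (\<Sum>m. \<Sum>p. cnj (h (m + p)) * (a m * hankel u a (n + Suc ((m + p) - m))))"
      by (rule triangle[OF le gs gss])
    then show ?thesis by simp
  qed
  also have "\<dots> = (\<Sum>q. cnj (h q) * (\<Sum>m\<le>q. a m * hankel u a (n + Suc (q - m))))"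
    by (simp add: sum_distrib_left)
  finally show ?thesis unfolding P_def .
qed



lemma l1_finite_support:
  assumes "\<And>n. N \<le> n \<Longrightarrow> f n = 0"
  shows "l1 f"
  by (rule summable_finite[of "{..<N}"]) (use assms in auto)

lemma hankel_finite:
  assumes "\<And>m. N \<le> m \<Longrightarrow> p m = 0" and "N \<le> n"
  shows "hankel p g n = 0"
  unfolding hankel_def using assms by simp

lemma nrm1_comb:
  assumes a: "l1 a" and b: "l1 b"
  shows "l1 (\<lambda>m. a m + c * b m)" and "nrm1 (\<lambda>m. a m + c * b m) \<le> nrm1 a + norm c * nrm1 b"
proof -
  have s: "summable (\<lambda>m. norm (a m) + norm c * norm (b m))" using a b by (intro summable_add summable_mult)
  have le: "norm (a m + c * b m) \<le> norm (a m) + norm c * norm (b m)" for m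
    using norm_triangle_ineq[of "a m" "c * b m"] by (simp add: norm_mult)
  show l: "l1 (\<lambda>m. a m + c * b m)"
    by (rule summable_comparison_test'[OF s, where N=0]) (use le in simp)
  have "nrm1 (\<lambda>m. a m + c * b m) \<le> (\<Sum>m. norm (a m) + norm c * norm (b m))"
    unfolding nrm1_def by (rule suminf_le[OF le l s])
  also have "\<dots> = nrm1 a + norm c * nrm1 b"
    unfolding nrm1_def using a b by (simp add: suminf_add[symmetric] suminf_mult)
  finally show "nrm1 (\<lambda>m. a m + c * b m) \<le> nrm1 a + norm c * nrm1 b" .
qed

lemma w_l1:
  fixes x :: real
  assumes u: "l1 u" and wL2: "summable (\<lambda>n. (norm (w n))^2)"
    and eq: "\<And>m. w m - complex_of_real x * hankel u (hankel u w) m = one_h m"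
  shows "l1 w"
proof -
  define X where "X = complex_of_real x"
  define Mw where "Mw = sqrt (\<Sum>n. (norm (w n))^2)"
  have wb: "norm (w n) \<le> Mw" for n unfolding Mw_def by (rule l2_bounded[OF wL2])
  define r0 where "r0 = 1 / (2 * \<bar>x\<bar> + 2)"
  have r0: "0 < r0" "r0 \<le> 1" "\<bar>x\<bar> * r0 < 1/2" unfolding r0_def by (auto simp: field_simps)
  obtain N where N: "\<And>n. n \<ge> N \<Longrightarrow> norm (\<Sum>i. norm (u (i + n))) < r0"
    using suminf_exist_split[OF r0(1) u] by blast
  define r where "r m = (if N \<le> m then u m else 0)" for m
  define p where "p m = (if m < N then u m else 0)" for m
  have upr: "u = (\<lambda>m. p m + r m)" unfolding p_def r_def by auto
  have lp: "l1 p" by (rule l1_finite_support[of N]) (simp add: p_def)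
  have lr: "l1 r" by (rule summable_comparison_test'[OF u, where N=0]) (simp add: r_def)
  define \<rho> where "\<rho> = nrm1 r"
  have \<rho>0: "\<rho> \<ge> 0" unfolding \<rho>_def by (rule nrm1_nonneg[OF lr])
  have \<rho>r: "\<rho> \<le> r0"
  proof -
    have "\<rho> = (\<Sum>m. if N \<le> m then norm (u m) else 0)" unfolding \<rho>_def nrm1_def r_def
      by (rule suminf_cong) auto
    also have "\<dots> = (\<Sum>i. norm (u (i + N)))"
      by (rule suminf_shift_zero) (rule summable_ignore_initial_segment[OF u])
    also have "\<dots> < r0" using N[of N] by simp
    finally show ?thesis by simp
  qed
  define q where "q = \<bar>x\<bar> * \<rho>^2"
  have q0: "q \<ge> 0" unfolding q_def by simp
  have q1: "q \<le> 1/2"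
  proof -
    have "\<rho> * \<rho> \<le> r0 * 1" by (rule mult_mono) (use \<rho>0 \<rho>r r0 in auto)
    then have "\<rho>^2 \<le> r0" by (simp add: power2_eq_square)
    then have "\<bar>x\<bar> * \<rho>^2 \<le> \<bar>x\<bar> * r0" by (simp add: mult_left_mono)
    then show ?thesis using r0(3) unfolding q_def by simp
  qed
  have Hb: "norm (hankel r g n) \<le> C * \<rho>" if "\<And>k. norm (g k) \<le> C" for g C n
    unfolding \<rho>_def by (rule hankel_bound[OF lr that])
  have HHb: "norm (X * hankel r (hankel r g) n) \<le> q * C" if "\<And>k. norm (g k) \<le> C" for g C n
  proof -
    have "norm (hankel r (hankel r g) n) \<le> (C * \<rho>) * \<rho>" by (rule Hb) (rule Hb[OF that])
    then have "norm X * norm (hankel r (hankel r g) n) \<le> \<bar>x\<bar> * ((C * \<rho>) * \<rho>)"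
      unfolding X_def by (simp add: mult_left_mono)
    then show ?thesis unfolding q_def by (simp add: norm_mult power2_eq_square ac_simps)
  qed
  have HH1: "l1 (\<lambda>m. X * hankel r (hankel r g) m)" and
       HH1n: "nrm1 (\<lambda>m. X * hankel r (hankel r g) m) \<le> q * nrm1 g" if "l1 g" for g
  proof -
    have l: "l1 (hankel r (hankel r g))" by (rule hankel_l1(1)[OF lr hankel_l1(1)[OF lr that]])
    then show "l1 (\<lambda>m. X * hankel r (hankel r g) m)" by (simp add: norm_mult summable_mult)
    have "nrm1 (hankel r (hankel r g)) \<le> \<rho> * nrm1 (hankel r g)"
      unfolding \<rho>_def by (rule hankel_l1(2)[OF lr hankel_l1(1)[OF lr that]])
    also have "\<dots> \<le> \<rho> * (\<rho> * nrm1 g)"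
      by (rule mult_left_mono[OF _ \<rho>0]) (unfold \<rho>_def, rule hankel_l1(2)[OF lr that])
    finally have "nrm1 (hankel r (hankel r g)) \<le> \<rho> * (\<rho> * nrm1 g)" .
    moreover have "nrm1 (\<lambda>m. X * hankel r (hankel r g) m) = \<bar>x\<bar> * nrm1 (hankel r (hankel r g))"
      unfolding nrm1_def X_def using l by (simp add: norm_mult suminf_mult)
    moreover have "\<bar>x\<bar> * nrm1 (hankel r (hankel r g)) \<le> \<bar>x\<bar> * (\<rho> * (\<rho> * nrm1 g))"
      using calculation(1) by (rule mult_left_mono) simp
    ultimately show "nrm1 (\<lambda>m. X * hankel r (hankel r g) m) \<le> q * nrm1 g"
      unfolding q_def by (simp add: power2_eq_square ac_simps)
  qed
  have ub: "norm (hankel u w k) \<le> Mw * nrm1 u" for k by (rule hankel_bound[OF u wb])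
  have pb: "norm (hankel p w k) \<le> Mw * nrm1 p" for k by (rule hankel_bound[OF lp wb])
  have rb: "norm (hankel r w k) \<le> Mw * nrm1 r" for k by (rule hankel_bound[OF lr wb])
  define f where "f m = one_h m + X * (hankel p (hankel u w) m + hankel r (hankel p w) m)" for m
  have wf: "w m = f m + X * hankel r (hankel r w) m" for m
  proof -
    have "hankel u (hankel u w) m = hankel p (hankel u w) m + hankel r (hankel u w) m"
      by (subst upr, rule hankel_add_sym[OF lp lr ub])
    moreover have "hankel u w = (\<lambda>k. hankel p w k + hankel r w k)"
      by (rule ext, subst upr, rule hankel_add_sym[OF lp lr wb])
    moreover have "hankel r (\<lambda>k. hankel p w k + hankel r w k) m = hankel r (hankel p w) m + hankel r (hankel r w) m"
      by (rule hankel_add_arg[OF lr pb rb])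
    ultimately have "hankel u (hankel u w) m = hankel p (hankel u w) m + hankel r (hankel p w) m + hankel r (hankel r w) m"
      by simp
    then show ?thesis using eq[of m] unfolding f_def X_def by (simp add: algebra_simps)
  qed
  have lf: "l1 f"
  proof -
    have l1: "l1 one_h" by (rule l1_finite_support[of 1]) (simp add: one_h_def)
    have l2: "l1 (hankel p (hankel u w))"
      by (rule l1_finite_support[of N]) (rule hankel_finite, auto simp: p_def)
    have l2': "l1 (hankel p w)"
      by (rule l1_finite_support[of N]) (rule hankel_finite, auto simp: p_def)
    have l3: "l1 (hankel r (hankel p w))" by (rule hankel_l1(1)[OF lr l2'])
    show ?thesis
    proof -
      have "l1 (\<lambda>m. hankel p (hankel u w) m + 1 * hankel r (hankel p w) m)" by (rule nrm1_comb(1)[OF l2 l3])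
      then have "l1 (\<lambda>m. one_h m + X * (hankel p (hankel u w) m + 1 * hankel r (hankel p w) m))"
        by (rule nrm1_comb(1)[OF l1])
      then show ?thesis unfolding f_def by simp
    qed
  qed
  define Bd where "Bd = nrm1 f / (1 - q)"
  have Bd: "nrm1 f + q * Bd = Bd" using q1 unfolding Bd_def by (simp add: field_simps)
  have Bd0: "Bd \<ge> 0" unfolding Bd_def using nrm1_nonneg[OF lf] q1 by simp
  define gs where "gs = rec_nat (\<lambda>_. 0) (\<lambda>k g m. f m + X * hankel r (hankel r g) m)"
  have gs0: "gs 0 = (\<lambda>_. 0)" unfolding gs_def by simp
  have gsS: "gs (Suc k) = (\<lambda>m. f m + X * hankel r (hankel r (gs k)) m)" for k unfolding gs_def by simp
  have C1: "l1 (gs k) \<and> nrm1 (gs k) \<le> Bd" for k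
  proof (induction k)
    case 0 then show ?case using Bd0 by (simp add: gs0 nrm1_def)
  next
    case (Suc k)
    then have lg: "l1 (gs k)" and ng: "nrm1 (gs k) \<le> Bd" by auto
    have l: "l1 (\<lambda>m. f m + 1 * (X * hankel r (hankel r (gs k)) m))"
      by (rule nrm1_comb(1)[OF lf HH1[OF lg]])
    have "nrm1 (\<lambda>m. f m + 1 * (X * hankel r (hankel r (gs k)) m)) \<le> nrm1 f + norm (1::complex) * nrm1 (\<lambda>m. X * hankel r (hankel r (gs k)) m)"
      by (rule nrm1_comb(2)[OF lf HH1[OF lg]])
    also have "\<dots> \<le> nrm1 f + q * nrm1 (gs k)" using HH1n[OF lg] by simp
    also have "\<dots> \<le> nrm1 f + q * Bd" using ng q0 by (simp add: mult_left_mono)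
    finally show ?case using l Bd unfolding gsS by simp
  qed
  have C2: "norm (w n - gs k n) \<le> q^k * Mw" for k n
  proof (induction k arbitrary: n)
    case 0 then show ?case using wb by (simp add: gs0)
  next
    case (Suc k)
    have gb: "norm (gs k m) \<le> Bd" for m using C1[of k] l1_le_nrm1[of "gs k" m] by auto
    have wgb: "norm (w m - gs k m) \<le> q^k * Mw" for m by (rule Suc.IH)
    have e: "w n - gs (Suc k) n = X * hankel r (hankel r (\<lambda>m. w m - gs k m)) n"
    proof -
      have "hankel r (\<lambda>m. w m - gs k m) = (\<lambda>m. hankel r w m - hankel r (gs k) m)"
        by (rule ext, rule hankel_diff_arg[OF lr wb gb])
      moreover have "hankel r (\<lambda>m. hankel r w m - hankel r (gs k) m) n = hankel r (hankel r w) n - hankel r (hankel r (gs k)) n"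
        by (rule hankel_diff_arg[OF lr Hb[OF wb] Hb[OF gb]])
      ultimately have "X * hankel r (hankel r (\<lambda>m. w m - gs k m)) n = X * hankel r (hankel r w) n - X * hankel r (hankel r (gs k)) n"
        by (simp add: right_diff_distrib)
      then show ?thesis unfolding gsS using wf[of n] by simp
    qed
    have "norm (X * hankel r (hankel r (\<lambda>m. w m - gs k m)) n) \<le> q * (q^k * Mw)"
      by (rule HHb[OF wgb])
    then show ?case unfolding e by simp
  qed
  have partial: "(\<Sum>n\<le>M. norm (w n)) \<le> Bd" for M
  proof -
    have le: "(\<Sum>n\<le>M. norm (w n)) \<le> Bd + (real (Suc M) * Mw) * q^k" for k
    proof -
      have "(\<Sum>n\<le>M. norm (w n)) \<le> (\<Sum>n\<le>M. norm (gs k n) + q^k * Mw)"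
      proof (rule sum_mono)
        fix n show "norm (w n) \<le> norm (gs k n) + q^k * Mw"
          using C2[where k=k and n=n] norm_triangle_ineq2[of "w n" "gs k n"] by simp
      qed
      also have "\<dots> = (\<Sum>n\<le>M. norm (gs k n)) + real (Suc M) * (q^k * Mw)" by (simp add: sum.distrib)
      also have "(\<Sum>n\<le>M. norm (gs k n)) \<le> Bd"
        using C1[of k] sum_le_suminf[of "\<lambda>n. norm (gs k n)" "{..M}"] unfolding nrm1_def by auto
      finally show ?thesis by (simp add: ac_simps)
    qed
    have lim: "(\<lambda>k. Bd + (real (Suc M) * Mw) * q^k) \<longlonglongrightarrow> Bd + (real (Suc M) * Mw) * 0"
      using q0 q1 by (intro tendsto_intros) simp
    show ?thesis using LIMSEQ_le_const[OF lim] le by simp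
  qed
  show ?thesis by (rule bounded_imp_summable[of _ Bd]) (use partial in simp_all)
qed



lemma hmult_l1:
  assumes a: "l1 a" and b: "l1 b"
  shows "l1 (hmult a b)"
proof (rule summable_comparison_test'[where N=0])
  show "summable (\<lambda>k. \<Sum>i\<le>k. norm (a i) * norm (b (k - i)))"
    by (rule summable_Cauchy_product) (use a b in simp_all)
  fix k
  have "norm (hmult a b k) \<le> (\<Sum>i\<le>k. norm (a i * b (k - i)))" unfolding hmult_def by (rule norm_sum)
  then show "norm (norm (hmult a b k)) \<le> (\<Sum>i\<le>k. norm (a i) * norm (b (k - i)))"
    by (simp add: norm_mult)
qed

lemma conv_split:
  fixes f g :: "nat \<Rightarrow> complex"
  shows "(\<Sum>j\<le>n. f j * g (n + Suc k - j)) + (\<Sum>m\<le>k. g m * f (n + Suc k - m))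
       = (\<Sum>j\<le>n + Suc k. f j * g (n + Suc k - j))"
proof -
  have "(\<Sum>m\<le>k. g m * f (n + Suc k - m)) = (\<Sum>j = Suc n..n + Suc k. f j * g (n + Suc k - j))"
  proof (rule sum.reindex_bij_witness[where i="\<lambda>j. n + Suc k - j" and j="\<lambda>m. n + Suc k - m"])
  qed (auto simp: mult.commute)
  moreover have "(\<Sum>j\<le>n + Suc k. f j * g (n + Suc k - j))
      = (\<Sum>j\<le>n. f j * g (n + Suc k - j)) + (\<Sum>j = Suc n..n + Suc k. f j * g (n + Suc k - j))"
    by (rule sum_up_index_split)
  ultimately show ?thesis by simp
qed

lemma conv_comm:
  fixes f g :: "nat \<Rightarrow> complex"
  shows "(\<Sum>j\<le>N. g j * f (N - j)) = (\<Sum>j\<le>N. f j * g (N - j))"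
proof (rule sum.reindex_bij_witness[where i="\<lambda>j. N - j" and j="\<lambda>j. N - j"])
qed (auto simp: mult.commute)


lemma hmult_PiK:
  assumes a: "l1 a" and u: "l1 u" and h: "\<And>k. norm (h k) \<le> B"
  shows "hmult a (Pi_conj_mult a (Kop u h)) n = (\<Sum>k. (\<Sum>j\<le>n. a j * hankel u a (n + Suc k - j)) * cnj (h k))"
    and "summable (\<lambda>k. (\<Sum>j\<le>n. a j * hankel u a (n + Suc k - j)) * cnj (h k))"
proof -
  have la: "l1 (hankel u a)" by (rule hankel_l1(1)[OF u a])
  have s': "summable (\<lambda>k. hankel u a (n + Suc k - j) * cnj (h k))" if "j \<le> n" for j
  proof -
    have "summable (\<lambda>k. hankel u a (Suc (n - j) + k) * cnj (h k))"
      by (rule hankel_summable[OF la h])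
    moreover have "Suc (n - j) + k = n + Suc k - j" for k using that by simp
    ultimately show ?thesis by simp
  qed
  have s: "summable (\<lambda>k. a j * (hankel u a (n + Suc k - j) * cnj (h k)))" if "j \<le> n" for j
    using s'[OF that] by (rule summable_mult)
  have "hmult a (Pi_conj_mult a (Kop u h)) n = (\<Sum>j\<le>n. a j * (\<Sum>k. cnj (h k) * hankel u a (n - j + Suc k)))"
    unfolding hmult_def by (simp add: PiK[OF a u h])
  also have "\<dots> = (\<Sum>j\<le>n. \<Sum>k. a j * (hankel u a (n + Suc k - j) * cnj (h k)))"
  proof (rule sum.cong[OF refl])
    fix j assume j: "j \<in> {..n}"
    have "(\<Sum>k. a j * (hankel u a (n + Suc k - j) * cnj (h k))) = a j * (\<Sum>k. hankel u a (n + Suc k - j) * cnj (h k))"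
      by (rule suminf_mult) (use s'[of j] j in simp)
    moreover have "n - j + Suc k = n + Suc k - j" for k using j by simp
    ultimately show "a j * (\<Sum>k. cnj (h k) * hankel u a (n - j + Suc k)) = (\<Sum>k. a j * (hankel u a (n + Suc k - j) * cnj (h k)))"
      by (simp add: mult.commute)
  qed
  also have "\<dots> = (\<Sum>k. \<Sum>j\<le>n. a j * (hankel u a (n + Suc k - j) * cnj (h k)))"
    by (rule suminf_sum[symmetric]) (use s in simp)
  also have "\<dots> = (\<Sum>k. (\<Sum>j\<le>n. a j * hankel u a (n + Suc k - j)) * cnj (h k))"
    by (simp add: sum_distrib_right mult.assoc)
  finally show "hmult a (Pi_conj_mult a (Kop u h)) n = (\<Sum>k. (\<Sum>j\<le>n. a j * hankel u a (n + Suc k - j)) * cnj (h k))" .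
  have "summable (\<lambda>k. \<Sum>j\<le>n. a j * (hankel u a (n + Suc k - j) * cnj (h k)))"
    by (rule summable_sum) (use s in simp)
  then show "summable (\<lambda>k. (\<Sum>j\<le>n. a j * hankel u a (n + Suc k - j)) * cnj (h k))"
    by (simp add: sum_distrib_right mult.assoc)
qed

lemma KPi':
  assumes a: "l1 a" and u: "l1 u" and h: "\<And>k. norm (h k) \<le> B"
  shows "Kop u (hmult a (Pi_conj_mult a h)) n = (\<Sum>q. (\<Sum>m\<le>q. a m * hankel u a (n + Suc q - m)) * cnj (h q))"
    and "summable (\<lambda>q. (\<Sum>m\<le>q. a m * hankel u a (n + Suc q - m)) * cnj (h q))"
proof -
  have e: "(\<Sum>m\<le>q. a m * hankel u a (n + Suc (q - m))) = (\<Sum>m\<le>q. a m * hankel u a (n + Suc q - m))" for q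
    by (rule sum.cong) (auto simp: Suc_diff_le)
  show "Kop u (hmult a (Pi_conj_mult a h)) n = (\<Sum>q. (\<Sum>m\<le>q. a m * hankel u a (n + Suc q - m)) * cnj (h q))"
    unfolding KPi[OF a u h] e by (simp add: mult.commute)
  define V where "V r = hankel u a (Suc n + r)" for r
  have la: "l1 (hankel u a)" by (rule hankel_l1(1)[OF u a])
  have lV: "l1 V" unfolding V_def by (rule l1_shift(1)[OF la])
  have e2: "(\<Sum>m\<le>q. a m * hankel u a (n + Suc q - m)) = hmult a V q" for q
    unfolding hmult_def V_def
  proof (rule sum.cong[OF refl])
    fix m assume "m \<in> {..q}"
    then have "n + Suc q - m = Suc n + (q - m)" by auto
    then show "a m * hankel u a (n + Suc q - m) = a m * hankel u a (Suc n + (q - m))" by simp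
  qed
  have "summable (\<lambda>q. hmult a V (0 + q) * cnj (h q))"
    by (rule hankel_summable[OF hmult_l1[OF a lV] h])
  then show "summable (\<lambda>q. (\<Sum>m\<le>q. a m * hankel u a (n + Suc q - m)) * cnj (h q))"
    unfolding e2 by simp
qed

lemma Kop_lin:
  assumes u: "l1 u" and Y1: "\<And>k. norm (Y1 k) \<le> B1" and Y2: "\<And>k. norm (Y2 k) \<le> B2"
  shows "Kop u (\<lambda>m. c * (Y1 m + d * Y2 m)) n = cnj c * (Kop u Y1 n + cnj d * Kop u Y2 n)"
proof -
  have Yb: "norm (c * (Y1 m + d * Y2 m)) \<le> norm c * (B1 + norm d * B2)" for m
  proof -
    have "norm (Y1 m + d * Y2 m) \<le> norm (Y1 m) + norm d * norm (Y2 m)"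
      using norm_triangle_ineq[of "Y1 m" "d * Y2 m"] by (simp add: norm_mult)
    also have "\<dots> \<le> B1 + norm d * B2" using Y1[of m] mult_left_mono[OF Y2[of m], of "norm d"] by simp
    finally show ?thesis by (simp add: norm_mult mult_left_mono)
  qed
  have s1: "summable (\<lambda>k. u (n + Suc k) * cnj (Y1 k))" by (rule Kop_summable[OF u Y1])
  have s2: "summable (\<lambda>k. u (n + Suc k) * cnj (Y2 k))" by (rule Kop_summable[OF u Y2])
  have "Kop u (\<lambda>m. c * (Y1 m + d * Y2 m)) n = (\<Sum>k. u (n + Suc k) * cnj (c * (Y1 k + d * Y2 k)))"
    by (rule Kop_eq[OF u Yb])
  also have "\<dots> = (\<Sum>k. cnj c * (u (n + Suc k) * cnj (Y1 k) + cnj d * (u (n + Suc k) * cnj (Y2 k))))"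
    by (simp add: algebra_simps)
  also have "\<dots> = cnj c * ((\<Sum>k. u (n + Suc k) * cnj (Y1 k)) + cnj d * (\<Sum>k. u (n + Suc k) * cnj (Y2 k)))"
    using suminf_add[OF s1 summable_mult[OF s2, of "cnj d"]] suminf_mult[OF s2, of "cnj d"]
      suminf_mult[OF summable_add[OF s1 summable_mult[OF s2, of "cnj d"]], of "cnj c"] by simp
  also have "\<dots> = cnj c * (Kop u Y1 n + cnj d * Kop u Y2 n)"
    using Kop_eq[OF u Y1, where n=n] Kop_eq[OF u Y2, where n=n] by simp
  finally show ?thesis .
qed


lemma cnj_c: "cnj (complex_of_real x / (4 * \<i>)) = - (complex_of_real x / (4 * \<i>))"
  by (simp add: complex_eq_iff)

lemma comm_identity:
  fixes x :: real
  assumes u: "l1 u" and w: "l1 w"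
    and eq: "\<And>m. w m - complex_of_real x * hankel u (hankel u w) m = one_h m"
    and h: "\<And>k. norm (h k) \<le> B"
  shows "complex_of_real x / (4 * \<i>) * (hmult w (Pi_conj_mult w (Kop u h)) n
            + complex_of_real x * hmult (hankel u w) (Pi_conj_mult (hankel u w) (Kop u h)) n)
       - Kop u (\<lambda>m. complex_of_real x / (4 * \<i>) * (hmult w (Pi_conj_mult w h) m
            + complex_of_real x * hmult (hankel u w) (Pi_conj_mult (hankel u w) h) m)) n
       = Kop (\<lambda>m. complex_of_real x / (2 * \<i>) * hmult w (hankel u w) m) h n"
proof -
  define v where "v = hankel u w"
  define X where "X = complex_of_real x"
  define c where "c = X / (4 * \<i>)"
  have lv: "l1 v" unfolding v_def by (rule hankel_l1(1)[OF u w])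
  have Hv: "X * hankel u v m = w m" if "m \<noteq> 0" for m
    using eq[of m] that unfolding X_def v_def one_h_def by simp
  have cc: "cnj c = - c" unfolding c_def X_def by (rule cnj_c)
  have cX: "cnj X = X" unfolding X_def by simp
  have B0: "B \<ge> 0" using order_trans[OF norm_ge_zero h[of 0]] .
  define A where "A k = (\<Sum>j\<le>n. w j * v (n + Suc k - j))" for k
  define Bk where "Bk k = (\<Sum>j\<le>n. v j * hankel u v (n + Suc k - j))" for k
  define Ck where "Ck k = (\<Sum>m\<le>k. w m * v (n + Suc k - m))" for k
  define Dk where "Dk k = (\<Sum>m\<le>k. v m * hankel u v (n + Suc k - m))" for k
  note PA = hmult_PiK[of w u h B n, OF w u h, folded v_def]
  note PB = hmult_PiK[of v u h B n, OF lv u h]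
  note PC = KPi'[of w u h B n, OF w u h, folded v_def]
  note PD = KPi'[of v u h B n, OF lv u h]
  have Y1: "norm (hmult w (Pi_conj_mult w h) k) \<le> nrm1 w * (B * nrm1 w)" for k
    by (rule hmult_bound[OF w Pi_summable(2)[of w h B, OF w h]])
  have Y2: "norm (hmult v (Pi_conj_mult v h) k) \<le> nrm1 v * (B * nrm1 v)" for k
    by (rule hmult_bound[OF lv Pi_summable(2)[of v h B, OF lv h]])
  have K2: "Kop u (\<lambda>m. c * (hmult w (Pi_conj_mult w h) m + X * hmult v (Pi_conj_mult v h) m)) n
      = cnj c * (Kop u (hmult w (Pi_conj_mult w h)) n + cnj X * Kop u (hmult v (Pi_conj_mult v h)) n)"
    by (rule Kop_lin[OF u Y1 Y2])
  have kern: "A k + X * Bk k + Ck k + X * Dk k = 2 * hmult w v (n + Suc k)" for k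
  proof -
    have XB: "X * Bk k = (\<Sum>j\<le>n. v j * w (n + Suc k - j))"
      unfolding Bk_def sum_distrib_left
      by (rule sum.cong[OF refl]) (use Hv in \<open>auto simp: ac_simps\<close>)
    have XD: "X * Dk k = (\<Sum>m\<le>k. v m * w (n + Suc k - m))"
      unfolding Dk_def sum_distrib_left
      by (rule sum.cong[OF refl]) (use Hv in \<open>auto simp: ac_simps\<close>)
    have 1: "A k + X * Dk k = hmult w v (n + Suc k)"
      unfolding A_def XD hmult_def by (rule conv_split)
    have 2: "X * Bk k + Ck k = hmult w v (n + Suc k)"
      unfolding Ck_def XB hmult_def using conv_split[where f=v and g=w and n=n and k=k] conv_comm[where N="n + Suc k" and f=w and g=v] by simp
    show ?thesis using 1 2 by (simp add: algebra_simps)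
  qed
  have lwv: "l1 (\<lambda>m. complex_of_real x / (2 * \<i>) * hmult w v m)"
    using hmult_l1[OF w lv] by (simp add: norm_mult)
  have RHS: "Kop (\<lambda>m. complex_of_real x / (2 * \<i>) * hmult w v m) h n
      = (\<Sum>k. (2 * c) * (hmult w v (n + Suc k) * cnj (h k)))"
    unfolding Kop_eq[OF lwv h] c_def X_def by (simp add: ac_simps)
  have sA: "summable (\<lambda>k. A k * cnj (h k))" unfolding A_def by (rule PA(2))
  have sB: "summable (\<lambda>k. Bk k * cnj (h k))" unfolding Bk_def by (rule PB(2))
  have sC: "summable (\<lambda>k. Ck k * cnj (h k))" unfolding Ck_def by (rule PC(2))
  have sD: "summable (\<lambda>k. Dk k * cnj (h k))" unfolding Dk_def by (rule PD(2))
  have "c * (hmult w (Pi_conj_mult w (Kop u h)) n + X * hmult v (Pi_conj_mult v (Kop u h)) n)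
      - Kop u (\<lambda>m. c * (hmult w (Pi_conj_mult w h) m + X * hmult v (Pi_conj_mult v h) m)) n
      = c * ((\<Sum>k. A k * cnj (h k)) + X * (\<Sum>k. Bk k * cnj (h k))
           + (\<Sum>k. Ck k * cnj (h k)) + X * (\<Sum>k. Dk k * cnj (h k)))"
    unfolding K2 cc cX PA(1) PB(1) PC(1) PD(1) A_def Bk_def Ck_def Dk_def by (simp add: algebra_simps)
  also have "\<dots> = c * (\<Sum>k. (A k + X * Bk k + Ck k + X * Dk k) * cnj (h k))"
  proof -
    have "(\<Sum>k. A k * cnj (h k)) + X * (\<Sum>k. Bk k * cnj (h k))
           + (\<Sum>k. Ck k * cnj (h k)) + X * (\<Sum>k. Dk k * cnj (h k))
        = (\<Sum>k. A k * cnj (h k)) + (\<Sum>k. X * (Bk k * cnj (h k)))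
           + (\<Sum>k. Ck k * cnj (h k)) + (\<Sum>k. X * (Dk k * cnj (h k)))"
      using suminf_mult[OF sB, of X] suminf_mult[OF sD, of X] by simp
    also have "\<dots> = (\<Sum>k. A k * cnj (h k) + X * (Bk k * cnj (h k)) + Ck k * cnj (h k) + X * (Dk k * cnj (h k)))"
      using sA summable_mult[OF sB, of X] sC summable_mult[OF sD, of X]
      by (simp add: suminf_add summable_add)
    also have "\<dots> = (\<Sum>k. (A k + X * Bk k + Ck k + X * Dk k) * cnj (h k))"
      by (simp add: algebra_simps)
    finally show ?thesis by simp
  qed
  also have "\<dots> = (\<Sum>k. (2 * c) * (hmult w v (n + Suc k) * cnj (h k)))"
  proof -
    have s: "summable (\<lambda>k. hmult w v (n + Suc k) * cnj (h k))"
      using Kop_summable[OF hmult_l1[OF w lv] h] .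
    show ?thesis unfolding kern using suminf_mult[OF s, of "2 * c"] suminf_mult[OF s, of 2]
      by (simp add: ac_simps)
  qed
  finally have L: "c * (hmult w (Pi_conj_mult w (Kop u h)) n + X * hmult v (Pi_conj_mult v (Kop u h)) n)
      - Kop u (\<lambda>m. c * (hmult w (Pi_conj_mult w h) m + X * hmult v (Pi_conj_mult v h) m)) n
      = Kop (\<lambda>m. complex_of_real x / (2 * \<i>) * hmult w v m) h n" using RHS by simp
  then show ?thesis unfolding c_def X_def v_def .
qed



lemma series_CS:
  fixes a b :: "nat \<Rightarrow> complex"
  assumes a: "summable (\<lambda>k. (norm (a k))^2)" and b: "summable (\<lambda>k. (norm (b k))^2)"
  shows "summable (\<lambda>k. norm (a k * b k))"
    and "(norm (\<Sum>k. a k * b k))^2 \<le> (\<Sum>k. (norm (a k))^2) * (\<Sum>k. (norm (b k))^2)"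
proof -
  have le: "norm (a k * b k) \<le> ((norm (a k))^2 + (norm (b k))^2) / 2" for k
  proof -
    have "0 \<le> (norm (a k) - norm (b k))^2" by simp
    then show ?thesis by (simp add: norm_mult power2_eq_square algebra_simps)
  qed
  have s: "summable (\<lambda>k. ((norm (a k))^2 + (norm (b k))^2) / 2)" using a b by (intro summable_divide summable_add)
  show sn: "summable (\<lambda>k. norm (a k * b k))"
    by (rule summable_comparison_test'[OF s, where N=0]) (use le in simp)
  define SA where "SA = (\<Sum>k. (norm (a k))^2)"
  define SB where "SB = (\<Sum>k. (norm (b k))^2)"
  have SA0: "SA \<ge> 0" unfolding SA_def using a by (simp add: suminf_nonneg)
  have SB0: "SB \<ge> 0" unfolding SB_def using b by (simp add: suminf_nonneg)
  have part: "(\<Sum>k<N. norm (a k * b k)) \<le> sqrt (SA * SB)" for N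
  proof -
    have "(\<Sum>k<N. norm (a k) * norm (b k))^2 \<le> (\<Sum>k<N. (norm (a k))^2) * (\<Sum>k<N. (norm (b k))^2)"
      by (rule Cauchy_Schwarz_ineq_sum)
    also have "\<dots> \<le> SA * SB"
    proof (rule mult_mono)
      show "(\<Sum>k<N. (norm (a k))^2) \<le> SA" unfolding SA_def by (rule sum_le_suminf[OF a]) auto
      show "(\<Sum>k<N. (norm (b k))^2) \<le> SB" unfolding SB_def by (rule sum_le_suminf[OF b]) auto
    qed (use SA0 in \<open>auto intro: sum_nonneg\<close>)
    finally have "(\<Sum>k<N. norm (a k) * norm (b k))^2 \<le> SA * SB" .
    then have "(\<Sum>k<N. norm (a k) * norm (b k)) \<le> sqrt (SA * SB)"
      by (simp add: real_le_rsqrt sum_nonneg)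
    then show ?thesis by (simp add: norm_mult)
  qed
  have "norm (\<Sum>k. a k * b k) \<le> (\<Sum>k. norm (a k * b k))" by (rule summable_norm[OF sn])
  also have "\<dots> \<le> sqrt (SA * SB)" by (rule suminf_le_const[OF sn part])
  finally have "norm (\<Sum>k. a k * b k) \<le> sqrt (SA * SB)" .
  then have "(norm (\<Sum>k. a k * b k))^2 \<le> (sqrt (SA * SB))^2" by (rule power_mono) simp
  then show "(norm (\<Sum>k. a k * b k))^2 \<le> (\<Sum>k. (norm (a k))^2) * (\<Sum>k. (norm (b k))^2)"
    using SA0 SB0 unfolding SA_def SB_def by simp
qed

lemma tail_le:
  fixes g :: "nat \<Rightarrow> real"
  assumes "summable g" "\<And>n. g n \<ge> 0"
  shows "summable (\<lambda>k. g (c + k))" and "(\<Sum>k. g (c + k)) \<le> suminf g"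
proof -
  show "summable (\<lambda>k. g (c + k))" using summable_ignore_initial_segment[OF assms(1), of c] by (simp add: add.commute)
  have "(\<Sum>k. g (k + c)) = suminf g - (\<Sum>i<c. g i)" by (rule suminf_minus_initial_segment[OF assms(1)])
  moreover have "(\<Sum>i<c. g i) \<ge> 0" using assms(2) by (simp add: sum_nonneg)
  ultimately show "(\<Sum>k. g (c + k)) \<le> suminf g" by (simp add: add.commute)
qed

definition Zs :: "real \<Rightarrow> real" where "Zs s = (\<Sum>n. inverse ((2 + real n) powr (2 * s)))"

lemma Zs_summable:
  assumes "s > 1/2"
  shows "summable (\<lambda>n. inverse ((2 + real n) powr (2 * s)))"
proof (rule summable_comparison_test'[OF summable_powr_shift[of "-(2 * s)"], where N=0])
  show "- (2 * s) < -1" using assms by simp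
  fix n
  have "(1 + real n) powr (2 * s) \<le> (2 + real n) powr (2 * s)" by (rule powr_mono2) (use assms in auto)
  moreover have "(1 + real n) powr (2 * s) > 0" by simp
  ultimately have "inverse ((2 + real n) powr (2 * s)) \<le> inverse ((1 + real n) powr (2 * s))"
    by (rule le_imp_inverse_le)
  then show "norm (inverse ((2 + real n) powr (2 * s))) \<le> (1 + real n) powr - (2 * s)"
    by (simp add: powr_minus)
qed

lemma Kop_l2:
  assumes s: "s > 1/2" and f: "in_Hs s f" and h: "summable (\<lambda>k. (norm (h k))^2)"
  shows "summable (\<lambda>n. (norm (Kop f h n))^2)"
    and "(\<Sum>n. (norm (Kop f h n))^2) \<le> Zs s * (\<Sum>m. ((1 + real m) powr (2 * s)) * (norm (f m))^2) * (\<Sum>k. (norm (h k))^2)"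
proof -
  define SF where "SF = (\<Sum>m. ((1 + real m) powr (2 * s)) * (norm (f m))^2)"
  define SH where "SH = (\<Sum>k. (norm (h k))^2)"
  have fs: "summable (\<lambda>m. ((1 + real m) powr (2 * s)) * (norm (f m))^2)" using f unfolding in_Hs_def .
  have SF0: "SF \<ge> 0" unfolding SF_def using fs by (simp add: suminf_nonneg)
  have SH0: "SH \<ge> 0" unfolding SH_def using h by (simp add: suminf_nonneg)
  have lf: "l1 f" by (rule Hs_l1[OF s f])
  have hb: "norm (h k) \<le> sqrt SH" for k unfolding SH_def by (rule l2_bounded[OF h])
  have f2: "summable (\<lambda>m. (norm (f m))^2)" by (rule Hs_l2[OF _ f]) (use s in simp)
  have tail: "summable (\<lambda>k. (norm (f (n + Suc k)))^2)" and
    tailb: "(\<Sum>k. (norm (f (n + Suc k)))^2) \<le> inverse ((2 + real n) powr (2 * s)) * SF" for n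
  proof -
    show "summable (\<lambda>k. (norm (f (n + Suc k)))^2)" using tail_le(1)[OF f2, of "Suc n"] by simp
    let ?W = "(2 + real n) powr (2 * s)"
    have W0: "?W > 0" by simp
    have le: "(norm (f (n + Suc k)))^2 \<le> inverse ?W * (((1 + real (Suc n + k)) powr (2 * s)) * (norm (f (Suc n + k)))^2)" for k
    proof -
      have "?W \<le> (1 + real (Suc n + k)) powr (2 * s)" by (rule powr_mono2) (use s in auto)
      then have "?W * (norm (f (Suc n + k)))^2 \<le> ((1 + real (Suc n + k)) powr (2 * s)) * (norm (f (Suc n + k)))^2"
        by (rule mult_right_mono) simp
      then show ?thesis using W0 by (simp add: field_simps)
    qed
    have ts: "summable (\<lambda>k. ((1 + real (Suc n + k)) powr (2 * s)) * (norm (f (Suc n + k)))^2)"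
      using tail_le(1)[OF fs, of "Suc n"] by simp
    have "(\<Sum>k. (norm (f (n + Suc k)))^2) \<le> (\<Sum>k. inverse ?W * (((1 + real (Suc n + k)) powr (2 * s)) * (norm (f (Suc n + k)))^2))"
      by (rule suminf_le[OF le]) (use tail_le(1)[OF f2, of "Suc n"] ts in \<open>simp_all add: summable_mult\<close>)
    also have "\<dots> = inverse ?W * (\<Sum>k. ((1 + real (Suc n + k)) powr (2 * s)) * (norm (f (Suc n + k)))^2)"
      using ts by (rule suminf_mult)
    also have "\<dots> \<le> inverse ?W * SF"
      unfolding SF_def by (rule mult_left_mono[OF tail_le(2)[OF fs]]) simp_all
    finally show "(\<Sum>k. (norm (f (n + Suc k)))^2) \<le> inverse ?W * SF" .
  qed
  have pt: "(norm (Kop f h n))^2 \<le> inverse ((2 + real n) powr (2 * s)) * SF * SH" for n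
  proof -
    have "Kop f h n = (\<Sum>k. f (n + Suc k) * cnj (h k))" by (rule Kop_eq[OF lf hb])
    then have "(norm (Kop f h n))^2 \<le> (\<Sum>k. (norm (f (n + Suc k)))^2) * (\<Sum>k. (norm (cnj (h k)))^2)"
      using series_CS(2)[OF tail, of "\<lambda>k. cnj (h k)"] h by simp
    also have "\<dots> \<le> (inverse ((2 + real n) powr (2 * s)) * SF) * SH"
      using mult_right_mono[OF tailb[of n] SH0] unfolding SH_def by simp
    finally show ?thesis .
  qed
  have zs: "summable (\<lambda>n. inverse ((2 + real n) powr (2 * s)) * SF * SH)"
    using Zs_summable[OF s] by (intro summable_mult2)
  show ks: "summable (\<lambda>n. (norm (Kop f h n))^2)"
    by (rule summable_comparison_test'[OF zs, where N=0]) (use pt in simp)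
  have "(\<Sum>n. (norm (Kop f h n))^2) \<le> (\<Sum>n. inverse ((2 + real n) powr (2 * s)) * SF * SH)"
    by (rule suminf_le[OF pt ks zs])
  also have "\<dots> = Zs s * SF * SH" unfolding Zs_def
    using suminf_mult2[OF Zs_summable[OF s], of "SF * SH"] by (simp add: ac_simps)
  finally show "(\<Sum>n. (norm (Kop f h n))^2) \<le> Zs s * (\<Sum>m. ((1 + real m) powr (2 * s)) * (norm (f m))^2) * (\<Sum>k. (norm (h k))^2)"
    unfolding SF_def SH_def .
qed


lemma in_Hs_comb:
  assumes a: "in_Hs s a" and b: "in_Hs s b"
  shows "in_Hs s (\<lambda>m. \<alpha> * a m + \<beta> * b m)"
proof -
  let ?W = "\<lambda>n. (1 + real n) powr (2 * s)"
  have le: "?W n * (norm (\<alpha> * a n + \<beta> * b n))^2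
      \<le> (2 * (norm \<alpha>)^2) * (?W n * (norm (a n))^2) + (2 * (norm \<beta>)^2) * (?W n * (norm (b n))^2)" for n
  proof -
    have t: "norm (\<alpha> * a n + \<beta> * b n) \<le> norm \<alpha> * norm (a n) + norm \<beta> * norm (b n)"
      using norm_triangle_ineq[of "\<alpha> * a n" "\<beta> * b n"] by (simp add: norm_mult)
    have "(norm (\<alpha> * a n + \<beta> * b n))^2 \<le> (norm \<alpha> * norm (a n) + norm \<beta> * norm (b n))^2"
      by (rule power_mono[OF t]) simp
    also have "\<dots> \<le> 2 * (norm \<alpha> * norm (a n))^2 + 2 * (norm \<beta> * norm (b n))^2"
    proof -
      have "0 \<le> (norm \<alpha> * norm (a n) - norm \<beta> * norm (b n))^2" by simp
      then show ?thesis by (simp add: power2_eq_square algebra_simps)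
    qed
    finally have "(norm (\<alpha> * a n + \<beta> * b n))^2 \<le> 2 * (norm \<alpha> * norm (a n))^2 + 2 * (norm \<beta> * norm (b n))^2" .
    then have "?W n * (norm (\<alpha> * a n + \<beta> * b n))^2 \<le> ?W n * (2 * (norm \<alpha> * norm (a n))^2 + 2 * (norm \<beta> * norm (b n))^2)"
      by (rule mult_left_mono) simp
    then show ?thesis by (simp add: algebra_simps power_mult_distrib)
  qed
  have s: "summable (\<lambda>n. (2 * (norm \<alpha>)^2) * (?W n * (norm (a n))^2) + (2 * (norm \<beta>)^2) * (?W n * (norm (b n))^2))"
    using a b unfolding in_Hs_def by (intro summable_add summable_mult)
  show ?thesis unfolding in_Hs_def
    by (rule summable_comparison_test'[OF s, where N=0]) (use le in simp)
qed

lemma Tz_bound: "(\<And>k. norm (h k) \<le> B) \<Longrightarrow> norm (Tz h k) \<le> B"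
  unfolding Tz_def by (cases k) (auto intro: order_trans[OF norm_ge_zero])

lemma Kop_lin2:
  assumes a: "l1 a" and b: "l1 b" and e: "l1 e" and h: "\<And>k. norm (h k) \<le> B"
  shows "Kop (\<lambda>m. (a m - b m) / c - e m) h n = (Kop a h n - Kop b h n) / c - Kop e h n"
proof -
  have tb: "\<And>k. norm (Tz h k) \<le> B" by (rule Tz_bound[OF h])
  have sa: "summable (\<lambda>k. a (n + k) * cnj (Tz h k))" by (rule hankel_summable[OF a tb])
  have sb: "summable (\<lambda>k. b (n + k) * cnj (Tz h k))" by (rule hankel_summable[OF b tb])
  have se: "summable (\<lambda>k. e (n + k) * cnj (Tz h k))" by (rule hankel_summable[OF e tb])
  have "Kop (\<lambda>m. (a m - b m) / c - e m) h n
      = (\<Sum>k. (a (n + k) * cnj (Tz h k) - b (n + k) * cnj (Tz h k)) / c - e (n + k) * cnj (Tz h k))"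
    unfolding Kop_def hankel_def by (simp add: algebra_simps diff_divide_distrib)
  also have "\<dots> = ((\<Sum>k. a (n + k) * cnj (Tz h k)) - (\<Sum>k. b (n + k) * cnj (Tz h k))) / c
       - (\<Sum>k. e (n + k) * cnj (Tz h k))"
    using suminf_diff[OF summable_divide[OF summable_diff[OF sa sb]] se, of c]
      suminf_divide[OF summable_diff[OF sa sb], of c] suminf_diff[OF sa sb] by simp
  also have "\<dots> = (Kop a h n - Kop b h n) / c - Kop e h n"
    unfolding Kop_def hankel_def ..
  finally show ?thesis .
qed

lemma one_h_L2: "L2plus one_h"
  unfolding in_Hs0_iff by (rule summable_finite[of "{0}"]) (auto simp: one_h_def)

lemma hs_norm_nonneg: "summable (\<lambda>n. ((1 + real n) powr (2 * s)) * (norm (f n))^2) \<Longrightarrow> hs_norm s f \<ge> 0"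
  unfolding hs_norm_def by (simp add: suminf_nonneg)

theorem corollary4:
  fixes s x :: real and u :: "real \<Rightarrow> hardy"
  assumes "s > 1/2"
    and "smooth_Hs_curve s u"
    and "\<forall>t. inv_op x (u t)"
    and "\<forall>t. hs_has_deriv s u
           (\<lambda>n. complex_of_real x / (2 * \<i>) *
                hmult (w_of x (u t)) (hankel (u t) (w_of x (u t))) n) t"
  shows "\<forall>t h. L2plus h \<longrightarrow>
           hs_has_deriv 0 (\<lambda>\<tau>. Kop (u \<tau>) h)
             (\<lambda>n. C_op x (u t) (Kop (u t) h) n - Kop (u t) (C_op x (u t) h) n) t"
proof (intro allI impI)
  fix t :: real and h :: hardy
  assume hL: "L2plus h"
  have s: "s > 1/2" using assms(1) .
  obtain D where D0: "D 0 = u" and Dk: "\<forall>k t. in_Hs s (D k t) \<and> hs_has_deriv s (D k) (D (Suc k) t) t"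
    using assms(2) unfolding smooth_Hs_curve_def by blast
  have uHs: "in_Hs s (u \<tau>)" for \<tau> using Dk D0 by metis
  define w where "w = w_of x (u t)"
  define v where "v = hankel (u t) w"
  define X where "X = complex_of_real x"
  define u' where "u' = (\<lambda>n. X / (2 * \<i>) * hmult w v n)"
  have der: "hs_has_deriv s u u' t" using assms(4) unfolding u'_def w_def v_def X_def by blast
  have u'Hs: "in_Hs s u'" using der unfolding hs_has_deriv_def by simp
  have lim: "((\<lambda>\<tau>. hs_norm s (\<lambda>n. (u (t + \<tau>) n - u t n) / complex_of_real \<tau> - u' n)) \<longlongrightarrow> 0) (at 0)"
    using der unfolding hs_has_deriv_def by simp
  have ex: "\<exists>!g. L2plus g \<and> (\<lambda>n. g n - X * hankel (u t) (hankel (u t) g) n) = one_h"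
    using assms(3) one_h_L2 unfolding inv_op_def X_def by blast
  have wprop: "L2plus w \<and> (\<lambda>n. w n - X * hankel (u t) (hankel (u t) w) n) = one_h"
    using theI'[OF ex] unfolding w_def w_of_def X_def .
  have eq: "w m - complex_of_real x * hankel (u t) (hankel (u t) w) m = one_h m" for m
    using wprop unfolding X_def by (metis (no_types, lifting))
  have lu: "l1 (u t)" by (rule Hs_l1[OF s uHs])
  have lw: "l1 w" by (rule w_l1[OF lu _ eq]) (use wprop in \<open>simp add: in_Hs0_iff\<close>)
  have h2: "summable (\<lambda>k. (norm (h k))^2)" using hL by (simp add: in_Hs0_iff)
  define SH where "SH = (\<Sum>k. (norm (h k))^2)"
  have SH0: "SH \<ge> 0" unfolding SH_def using h2 by (simp add: suminf_nonneg)
  have hb: "norm (h k) \<le> sqrt SH" for k unfolding SH_def by (rule l2_bounded[OF h2])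
  have ident: "(\<lambda>n. C_op x (u t) (Kop (u t) h) n - Kop (u t) (C_op x (u t) h) n) = Kop u' h"
  proof
    fix n
    show "C_op x (u t) (Kop (u t) h) n - Kop (u t) (C_op x (u t) h) n = Kop u' h n"
      unfolding C_op_def Let_def w_def[symmetric] u'_def v_def X_def
      using comm_identity[where u="u t" and w=w and x=x and h=h and B="sqrt SH" and n=n, OF lu lw eq hb] by simp
  qed
  have Zs0: "Zs s \<ge> 0" unfolding Zs_def using Zs_summable[OF s] by (simp add: suminf_nonneg)
  define K where "K = sqrt (Zs s * SH)"
  have bnd: "hs_norm 0 (Kop f h) \<le> K * hs_norm s f" if f: "in_Hs s f" for f
  proof -
    have "hs_norm 0 (Kop f h) = sqrt (\<Sum>n. (norm (Kop f h n))^2)" by (rule hs_norm0)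
    also have "\<dots> \<le> sqrt (Zs s * (\<Sum>m. ((1 + real m) powr (2 * s)) * (norm (f m))^2) * SH)"
      unfolding SH_def by (rule real_sqrt_le_mono[OF Kop_l2(2)[OF s f h2]])
    also have "\<dots> = K * hs_norm s f"
      unfolding K_def hs_norm_def by (simp add: real_sqrt_mult[symmetric] ac_simps)
    finally show ?thesis .
  qed
  show "hs_has_deriv 0 (\<lambda>\<tau>. Kop (u \<tau>) h)
             (\<lambda>n. C_op x (u t) (Kop (u t) h) n - Kop (u t) (C_op x (u t) h) n) t"
    unfolding ident hs_has_deriv_def
  proof
    show "in_Hs 0 (Kop u' h)" unfolding in_Hs0_iff by (rule Kop_l2(1)[OF s u'Hs h2])
    define d where "d \<tau> = (\<lambda>n. (u (t + \<tau>) n - u t n) / complex_of_real \<tau> - u' n)" for \<tau>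
    have dHs: "in_Hs s (d \<tau>)" for \<tau>
    proof -
      have "in_Hs s (\<lambda>m. inverse (complex_of_real \<tau>) * u (t + \<tau>) m + (- inverse (complex_of_real \<tau>)) * u t m)"
        by (rule in_Hs_comb[OF uHs uHs])
      then have "in_Hs s (\<lambda>m. 1 * (inverse (complex_of_real \<tau>) * u (t + \<tau>) m + (- inverse (complex_of_real \<tau>)) * u t m) + (-1) * u' m)"
        by (rule in_Hs_comb[OF _ u'Hs])
      moreover have "(\<lambda>m. 1 * (inverse (complex_of_real \<tau>) * u (t + \<tau>) m + (- inverse (complex_of_real \<tau>)) * u t m) + (-1) * u' m) = d \<tau>"
        unfolding d_def by (rule ext) (simp add: divide_inverse algebra_simps)
      ultimately show ?thesis by simp
    qed
    have lu': "l1 u'" by (rule Hs_l1[OF s u'Hs])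
    have eqK: "(\<lambda>n. (Kop (u (t + \<tau>)) h n - Kop (u t) h n) / complex_of_real \<tau> - Kop u' h n) = Kop (d \<tau>) h" for \<tau>
      unfolding d_def by (rule ext, rule Kop_lin2[OF Hs_l1[OF s uHs] lu lu' hb, symmetric])
    have ev: "\<forall>\<^sub>F \<tau> in at 0. norm (hs_norm 0 (\<lambda>n. (Kop (u (t + \<tau>)) h n - Kop (u t) h n) / complex_of_real \<tau> - Kop u' h n))
               \<le> K * hs_norm s (d \<tau>)"
    proof (rule always_eventually, rule allI)
      fix \<tau>
      have nn: "hs_norm 0 (Kop (d \<tau>) h) \<ge> 0" unfolding hs_norm0
        using suminf_nonneg[OF Kop_l2(1)[OF s dHs h2]] by simp
      show "norm (hs_norm 0 (\<lambda>n. (Kop (u (t + \<tau>)) h n - Kop (u t) h n) / complex_of_real \<tau> - Kop u' h n))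
               \<le> K * hs_norm s (d \<tau>)"
        unfolding eqK using bnd[OF dHs] nn by simp
    qed
    have "((\<lambda>\<tau>. K * hs_norm s (d \<tau>)) \<longlongrightarrow> K * 0) (at 0)"
      by (rule tendsto_mult[OF tendsto_const]) (use lim in \<open>simp add: d_def\<close>)
    then show "((\<lambda>\<tau>. hs_norm 0 (\<lambda>n. (Kop (u (t + \<tau>)) h n - Kop (u t) h n) / complex_of_real \<tau> - Kop u' h n)) \<longlongrightarrow> 0) (at 0)"
      using Lim_null_comparison[OF ev] by simp
  qed
qed


end
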